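(* Let $F$ be a forest with $n$ vertices and $m$ connected components. Then $\tau_F(x)=x^m$.
   Context: For a weighted graph $(G,\omega)$ (a finite simple graph with $\omega:V(G)\to\{1,2,\dots\}$), $X_{(G,\omega)}=\sum_\kappa\prod_{v\in V(G)}x_{\kappa(v)}^{\omega(v)}$, summed over proper colourings $\kappa:V(G)\to\{1,2,\dots\}$; for an unweighted graph $G$, $X_G$ is this with $\omega\equiv1$. Let $P_n$ be the path on $n$ vertices and for a partition $\lambda$ let $P_\lambda$ be the disjoint union $P_{\lambda_1}\cup\dots\cup P_{\lambda_{\ell(\lambda)}}$. It is known that $\{X_{P_\lambda}\}_\lambda$ is a (multiplicative) basis of the algebra $\Lambda$ of symmetric functions over $\mathbb{Q}$. For $f=\sum_\lambda a_\lambda X_{P_\lambda}\in\Lambda$, the tree polynomial is $\tau_f(x)=\sum_\lambda a_\lambda x^{\ell(\lambda)}$, and $\tau_{(G,\omega)}:=\tau_{X_{(G,\omega)}}$, $\tau_G:=\tau_{X_G}$. *)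

theory Defs
  imports Main "HOL-Library.FuncSet" "HOL-Computational_Algebra.Polynomial"
begin

definition is_graph :: "'a set \<Rightarrow> 'a set set \<Rightarrow> bool" where
  "is_graph V E \<longleftrightarrow> finite V \<and> (\<forall>e\<in>E. \<exists>u v. e = {u, v} \<and> u \<noteq> v \<and> u \<in> V \<and> v \<in> V)"

definition has_cycle :: "'a set \<Rightarrow> 'a set set \<Rightarrow> bool" where
  "has_cycle V E \<longleftrightarrow> (\<exists>vs. length vs \<ge> 3 \<and> distinct vs \<and> set vs \<subseteq> V \<and>
      (\<forall>i. Suc i < length vs \<longrightarrow> {vs ! i, vs ! Suc i} \<in> E) \<and> {last vs, hd vs} \<in> E)"

definition is_forest :: "'a set \<Rightarrow> 'a set set \<Rightarrow> bool" where
  "is_forest V E \<longleftrightarrow> is_graph V E \<and> \<not> has_cycle V E"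

definition conn_rel :: "'a set \<Rightarrow> 'a set set \<Rightarrow> ('a \<times> 'a) set" where
  "conn_rel V E = {(u, v). u \<in> V \<and> v \<in> V \<and> (\<lambda>x y. {x, y} \<in> E)\<^sup>*\<^sup>* u v}"

definition num_components :: "'a set \<Rightarrow> 'a set set \<Rightarrow> nat" where
  "num_components V E = card (V // conn_rel V E)"

definition proper_colourings :: "'a set \<Rightarrow> 'a set set \<Rightarrow> ('a \<Rightarrow> nat) set" where
  "proper_colourings V E = {\<kappa> \<in> V \<rightarrow>\<^sub>E {1..}. \<forall>u v. {u, v} \<in> E \<longrightarrow> \<kappa> u \<noteq> \<kappa> v}"

text \<open>Chromatic symmetric function X_G, given by its coefficients: the coefficient of the
  monomial prod_i x_i^(alpha i) is the number of proper colourings in which exactly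
  alpha i vertices receive colour i, for every i.\<close>
definition chrom_coeff :: "'a set \<Rightarrow> 'a set set \<Rightarrow> (nat \<Rightarrow> nat) \<Rightarrow> nat" where
  "chrom_coeff V E \<alpha> = card {\<kappa> \<in> proper_colourings V E. \<forall>i. card {v \<in> V. \<kappa> v = i} = \<alpha> i}"

definition is_partition :: "nat list \<Rightarrow> bool" where
  "is_partition la \<longleftrightarrow> sorted_wrt (\<ge>) la \<and> 0 \<notin> set la"

text \<open>P_lambda: disjoint union of paths P_{lambda_1}, ..., P_{lambda_l}.\<close>
definition pathV :: "nat list \<Rightarrow> (nat \<times> nat) set" where
  "pathV la = {(i, j). i < length la \<and> j < la ! i}"

definition pathE :: "nat list \<Rightarrow> (nat \<times> nat) set set" where
  "pathE la = {{(i, j), (i, Suc j)} | i j. i < length la \<and> Suc j < la ! i}"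

text \<open>a is a (finitely supported) coefficient family expressing X_G = sum a_lambda X_{P_lambda}.\<close>
definition path_expansion :: "'a set \<Rightarrow> 'a set set \<Rightarrow> (nat list \<Rightarrow> rat) \<Rightarrow> bool" where
  "path_expansion V E a \<longleftrightarrow> finite {la. a la \<noteq> 0} \<and> (\<forall>la. a la \<noteq> 0 \<longrightarrow> is_partition la) \<and>
     (\<forall>\<alpha>. of_nat (chrom_coeff V E \<alpha>) =
        (\<Sum>la\<in>{la. a la \<noteq> 0}. a la * of_nat (chrom_coeff (pathV la) (pathE la) \<alpha>)))"

definition tree_poly_of :: "(nat list \<Rightarrow> rat) \<Rightarrow> rat poly" where
  "tree_poly_of a = (\<Sum>la\<in>{la. a la \<noteq> 0}. monom (a la) (length la))"

end

theory Submission
  imports Defs "HOL-Combinatorics.List_Permutation"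
begin

lemma successively_nth:
  "successively P xs \<longleftrightarrow> (\<forall>i. Suc i < length xs \<longrightarrow> P (xs ! i) (xs ! Suc i))"
proof (induction xs rule: induct_list012)
  case (3 x y zs)
  show ?case
  proof
    assume "successively P (x # y # zs)"
    then show "\<forall>i. Suc i < length (x # y # zs) \<longrightarrow> P ((x # y # zs) ! i) ((x # y # zs) ! Suc i)"
      using "3.IH"(2) by (auto simp: nth_Cons split: nat.splits)
  next
    assume h: "\<forall>i. Suc i < length (x # y # zs) \<longrightarrow> P ((x # y # zs) ! i) ((x # y # zs) ! Suc i)"
    have "P x y" using h[rule_format, of 0] by simp
    moreover have "successively P (y # zs)"
      unfolding "3.IH"(2)
    proof (intro allI impI)
      fix i assume "Suc i < length (y # zs)"
      then show "P ((y # zs) ! i) ((y # zs) ! Suc i)" using h[rule_format, of "Suc i"] by simp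
    qed
    ultimately show "successively P (x # y # zs)" by simp
  qed
qed auto

definition adj :: "'a set set \<Rightarrow> 'a \<Rightarrow> 'a \<Rightarrow> bool" where
  "adj E a b \<longleftrightarrow> {a, b} \<in> E"

lemma adj_sym: "adj E a b \<longleftrightarrow> adj E b a"
  by (simp add: adj_def insert_commute)

definition cyc :: "'a set set \<Rightarrow> 'a list \<Rightarrow> bool" where
  "cyc E vs \<longleftrightarrow> length vs \<ge> 3 \<and> distinct vs \<and> successively (adj E) vs \<and> adj E (last vs) (hd vs)"

lemma has_cycle_cyc: "has_cycle V E \<longleftrightarrow> (\<exists>vs. cyc E vs \<and> set vs \<subseteq> V)"
  unfolding has_cycle_def cyc_def successively_nth adj_def by blast

lemma graph_no_loop: "is_graph V E \<Longrightarrow> {a} \<notin> E"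
  unfolding is_graph_def by (metis doubleton_eq_iff insert_absorb2)

lemma graph_edge_in: "is_graph V E \<Longrightarrow> {a, b} \<in> E \<Longrightarrow> a \<in> V \<and> b \<in> V"
  unfolding is_graph_def by (metis doubleton_eq_iff)

lemma graph_edge_neq: "is_graph V E \<Longrightarrow> {a, b} \<in> E \<Longrightarrow> a \<noteq> b"
  using graph_no_loop by fastforce

lemma cyc_set_sub: "is_graph V E \<Longrightarrow> cyc E vs \<Longrightarrow> set vs \<subseteq> V"
proof
  fix x assume g: "is_graph V E" and c: "cyc E vs" and x: "x \<in> set vs"
  then obtain i where i: "i < length vs" "vs ! i = x" by (auto simp: in_set_conv_nth)
  show "x \<in> V"
  proof (cases "Suc i < length vs")
    case True
    then have "adj E (vs!i) (vs ! Suc i)" using c by (auto simp: cyc_def successively_nth)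
    then show ?thesis using g i graph_edge_in unfolding adj_def by metis
  next
    case False
    then have "i = length vs - 1" using i by simp
    then have "x = last vs" using i by (cases vs rule: rev_cases) (auto simp: nth_append)
    then have "adj E x (hd vs)" using c by (auto simp: cyc_def)
    then show ?thesis using g graph_edge_in unfolding adj_def by metis
  qed
qed

lemma forest_no_cyc: "is_forest V E \<Longrightarrow> \<not> cyc E vs"
  unfolding is_forest_def using has_cycle_cyc cyc_set_sub by blast

lemma cyc_rotate:
  assumes "cyc E (as @ bs)" "as \<noteq> []" "bs \<noteq> []"
  shows "cyc E (bs @ as)"
  using assms unfolding cyc_def
  by (auto simp: successively_append_iff adj_sym)

lemma cyc_rev: "cyc E vs \<Longrightarrow> cyc E (rev vs)"
  unfolding cyc_def by (auto simp: last_rev hd_rev adj_sym)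

definition nbrs :: "'a set set \<Rightarrow> 'a \<Rightarrow> 'a set" where
  "nbrs E v = {w. {v, w} \<in> E}"

definition deg :: "'a set set \<Rightarrow> 'a \<Rightarrow> nat" where
  "deg E v = card (nbrs E v)"

lemma nbrs_sub: "is_graph V E \<Longrightarrow> nbrs E v \<subseteq> V"
  unfolding nbrs_def using graph_edge_in by fast

lemma nbrs_finite: "is_graph V E \<Longrightarrow> finite (nbrs E v)"
  using nbrs_sub[of V E v] unfolding is_graph_def by (blast intro: finite_subset)

definition is_path :: "'a set set \<Rightarrow> 'a list \<Rightarrow> bool" where
  "is_path E p \<longleftrightarrow> distinct p \<and> successively (adj E) p"

lemma max_path:
  assumes g: "is_graph V E" and v: "v \<in> V"
  shows "\<exists>p. is_path E p \<and> p \<noteq> [] \<and> hd p = v \<and> set p \<subseteq> V \<and> (\<forall>u. {last p, u} \<in> E \<longrightarrow> u \<in> set p)"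
proof -
  define S where "S = {p. is_path E p \<and> p \<noteq> [] \<and> hd p = v \<and> set p \<subseteq> V}"
  have fin: "finite V" using g is_graph_def by auto
  have "S \<subseteq> {p. set p \<subseteq> V \<and> length p \<le> card V}"
  proof
    fix p assume "p \<in> S"
    then have "distinct p" "set p \<subseteq> V" unfolding S_def is_path_def by auto
    then show "p \<in> {p. set p \<subseteq> V \<and> length p \<le> card V}"
      using distinct_card[of p] card_mono[OF fin, of "set p"] by simp
  qed
  then have finS: "finite S" using finite_subset[OF _ finite_lists_length_le[OF fin, of "card V"]] by blast
  have "[v] \<in> S" unfolding S_def is_path_def using v by auto
  then have ne: "length ` S \<noteq> {}" by blast
  obtain p where pS: "p \<in> S" and pmax: "length p = Max (length ` S)"
    using Max_in[OF finite_imageI[OF finS] ne] by (metis imageE)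
  have "u \<in> set p" if e: "{last p, u} \<in> E" for u
  proof (rule ccontr)
    assume nu: "u \<notin> set p"
    have uV: "u \<in> V" using graph_edge_in[OF g e] by simp
    have "p @ [u] \<in> S" using pS nu uV e unfolding S_def is_path_def
      by (simp add: successively_append_iff adj_def)
    then have "length (p @ [u]) \<in> length ` S" by (rule imageI)
    then have "length (p @ [u]) \<le> Max (length ` S)" using Max_ge[OF finite_imageI[OF finS]] by blast
    then show False using pmax by simp
  qed
  then show ?thesis using pS unfolding S_def by blast
qed

lemma successively_drop: "successively P xs \<Longrightarrow> successively P (drop k xs)"
  by (metis append_take_drop_id successively_append_iff)

lemma last_nbr_forest:
  assumes f: "is_forest V E" and p: "is_path E p" "p \<noteq> []" "set p \<subseteq> V"
    and mx: "\<forall>u. {last p, u} \<in> E \<longrightarrow> u \<in> set p"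
    and e: "{last p, u} \<in> E"
  shows "length p \<ge> 2 \<and> u = p ! (length p - 2)"
proof -
  have g: "is_graph V E" using f is_forest_def by auto
  have "u \<in> set p" using mx e by blast
  then obtain k where k: "k < length p" "p ! k = u" by (auto simp: in_set_conv_nth)
  have "u \<noteq> last p" using graph_edge_neq[OF g e] by blast
  moreover have "last p = p ! (length p - 1)" using p(2) by (simp add: last_conv_nth)
  ultimately have kl: "k \<noteq> length p - 1" using k by metis
  have "\<not> k < length p - 2"
  proof
    assume kk: "k < length p - 2"
    have d: "distinct (drop k p)" using p(1) unfolding is_path_def by simp
    have s: "successively (adj E) (drop k p)" using p(1) successively_drop unfolding is_path_def by blast
    have l: "length (drop k p) \<ge> 3" using kk by simp
    have "last (drop k p) = last p" using k by simp
    moreover have "hd (drop k p) = u" using k by (simp add: hd_drop_conv_nth)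
    ultimately have "adj E (last (drop k p)) (hd (drop k p))" using e by (simp add: adj_def)
    then have "cyc E (drop k p)" unfolding cyc_def using d s l by blast
    then show False using forest_no_cyc[OF f] by blast
  qed
  then have "k = length p - 2" using k kl by linarith
  moreover have "length p \<ge> 2" using k kl by linarith
  ultimately show ?thesis using k by simp
qed

lemma last_deg_le1:
  assumes f: "is_forest V E" and p: "is_path E p" "p \<noteq> []" "set p \<subseteq> V"
    and mx: "\<forall>u. {last p, u} \<in> E \<longrightarrow> u \<in> set p"
  shows "deg E (last p) \<le> 1"
proof -
  have "nbrs E (last p) \<subseteq> {p ! (length p - 2)}"
    using last_nbr_forest[OF f p mx] unfolding nbrs_def by auto
  then have "card (nbrs E (last p)) \<le> card {p ! (length p - 2)}" by (intro card_mono) auto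
  then show ?thesis unfolding deg_def by simp
qed

lemma exists_low_deg:
  assumes f: "is_forest V E" and ne: "V \<noteq> {}"
  shows "\<exists>z\<in>V. deg E z \<le> 1"
proof -
  obtain v where v: "v \<in> V" using ne by auto
  have g: "is_graph V E" using f is_forest_def by auto
  obtain p where p: "is_path E p" "p \<noteq> []" "hd p = v" "set p \<subseteq> V" "\<forall>u. {last p, u} \<in> E \<longrightarrow> u \<in> set p"
    using max_path[OF g v] by blast
  then show ?thesis using last_deg_le1[OF f p(1,2,4,5)] last_in_set[OF p(2)] by blast
qed

definition Pset :: "nat \<Rightarrow> 'a set \<Rightarrow> 'a set set \<Rightarrow> ('a \<Rightarrow> nat) set" where
  "Pset q V E = {\<kappa> \<in> V \<rightarrow>\<^sub>E {1..q}. \<forall>u v. {u, v} \<in> E \<longrightarrow> \<kappa> u \<noteq> \<kappa> v}"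

definition cnt :: "nat \<Rightarrow> 'a set \<Rightarrow> 'a set set \<Rightarrow> nat" where
  "cnt q V E = card (Pset q V E)"

lemma Pset_finite: "finite V \<Longrightarrow> finite (Pset q V E)"
  unfolding Pset_def by (rule finite_subset[OF _ finite_PiE[of V "\<lambda>_. {1..q}"]]) auto

lemma cnt_insert:
  assumes fin: "finite V'" and z: "z \<notin> V'" and g: "is_graph V' E'" and W: "W \<subseteq> V'"
    and E: "E = E' \<union> (\<lambda>w. {z, w}) ` W"
  shows "cnt q (insert z V') E = (\<Sum>\<kappa>\<in>Pset q V' E'. card ({1..q} - \<kappa> ` W))"
proof -
  define A where "A = Sigma (Pset q V' E') (\<lambda>\<kappa>. {1..q} - \<kappa> ` W)"
  define f where "f = (\<lambda>(\<kappa>::'a \<Rightarrow> nat, c::nat). \<kappa>(z := c))"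
  have zW: "z \<notin> W" using z W by auto
  have bij: "bij_betw f A (Pset q (insert z V') E)"
  proof (rule bij_betwI[where g = "\<lambda>\<kappa>. (\<kappa>(z := undefined), \<kappa> z)"])
    show "f \<in> A \<rightarrow> Pset q (insert z V') E"
    proof
      fix x assume x: "x \<in> A"
      then obtain \<kappa> c where xx: "x = (\<kappa>, c)" and k: "\<kappa> \<in> Pset q V' E'" and c: "c \<in> {1..q}" "c \<notin> \<kappa> ` W"
        unfolding A_def by auto
      have kP: "\<kappa> \<in> V' \<rightarrow>\<^sub>E {1..q}" and kp: "\<And>u v. {u, v} \<in> E' \<Longrightarrow> \<kappa> u \<noteq> \<kappa> v"
        using k unfolding Pset_def by auto
      have "\<kappa>(z := c) \<in> insert z V' \<rightarrow>\<^sub>E {1..q}" using kP c(1) z by (auto simp: PiE_def extensional_def Pi_def)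
      moreover have "(\<kappa>(z := c)) u \<noteq> (\<kappa>(z := c)) v" if e: "{u, v} \<in> E" for u v
      proof (cases "{u, v} \<in> E'")
        case True
        then have "u \<in> V'" "v \<in> V'" using graph_edge_in[OF g] by auto
        then have "u \<noteq> z" "v \<noteq> z" using z by auto
        then show ?thesis using kp[OF True] by simp
      next
        case False
        then obtain w where w: "w \<in> W" "{u, v} = {z, w}" using e E by auto
        have wz: "w \<noteq> z" using w zW by auto
        from w(2) have "(u = z \<and> v = w) \<or> (u = w \<and> v = z)" by (auto simp: doubleton_eq_iff)
        then show ?thesis using wz c(2) w(1) by auto
      qed
      ultimately show "f x \<in> Pset q (insert z V') E" unfolding xx f_def Pset_def by auto
    qed
  next
    show "(\<lambda>\<kappa>. (\<kappa>(z := undefined), \<kappa> z)) \<in> Pset q (insert z V') E \<rightarrow> A"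
    proof
      fix \<kappa> assume k: "\<kappa> \<in> Pset q (insert z V') E"
      have kP: "\<kappa> \<in> insert z V' \<rightarrow>\<^sub>E {1..q}" and kp: "\<And>u v. {u, v} \<in> E \<Longrightarrow> \<kappa> u \<noteq> \<kappa> v"
        using k unfolding Pset_def by auto
      have "\<kappa>(z := undefined) \<in> V' \<rightarrow>\<^sub>E {1..q}" using kP z by (auto simp: PiE_def extensional_def Pi_def)
      moreover have "(\<kappa>(z := undefined)) u \<noteq> (\<kappa>(z := undefined)) v" if e: "{u, v} \<in> E'" for u v
      proof -
        have "u \<in> V'" "v \<in> V'" using graph_edge_in[OF g e] by auto
        then have "u \<noteq> z" "v \<noteq> z" using z by auto
        then show ?thesis using kp[of u v] e E by auto
      qed
      moreover have "\<kappa> z \<in> {1..q}" using kP by auto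
      moreover have "\<kappa> z \<notin> (\<kappa>(z := undefined)) ` W"
      proof
        assume "\<kappa> z \<in> (\<kappa>(z := undefined)) ` W"
        then obtain w where w: "w \<in> W" "\<kappa> z = \<kappa> w" using zW by auto
        have "{z, w} \<in> E" using w(1) E by auto
        then show False using kp w(2) by blast
      qed
      ultimately show "(\<kappa>(z := undefined), \<kappa> z) \<in> A" unfolding A_def Pset_def by auto
    qed
  next
    fix x assume "x \<in> A"
    then obtain \<kappa> c where xx: "x = (\<kappa>, c)" and k: "\<kappa> \<in> Pset q V' E'"
      unfolding A_def by auto
    have "\<kappa> z = undefined" using k z unfolding Pset_def by (auto simp: PiE_def extensional_def)
    then have "\<kappa>(z := undefined) = \<kappa>" by auto
    then show "((f x)(z := undefined), f x z) = x" unfolding xx f_def by simp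
  next
    fix \<kappa> assume "\<kappa> \<in> Pset q (insert z V') E"
    show "f (\<kappa>(z := undefined), \<kappa> z) = \<kappa>" unfolding f_def by simp
  qed
  have "cnt q (insert z V') E = card A" unfolding cnt_def using bij_betw_same_card[OF bij] by simp
  also have "\<dots> = (\<Sum>\<kappa>\<in>Pset q V' E'. card ({1..q} - \<kappa> ` W))"
    unfolding A_def using Pset_finite[OF fin] by (intro card_SigmaI) auto
  finally show ?thesis .
qed

lemma cnt_leaf:
  assumes fin: "finite V'" and z: "z \<notin> V'" and g: "is_graph V' E'" and u: "u \<in> V'"
    and E: "E = insert {z, u} E'"
  shows "cnt q (insert z V') E = (q - 1) * cnt q V' E'"
proof -
  have "cnt q (insert z V') E = (\<Sum>\<kappa>\<in>Pset q V' E'. card ({1..q} - \<kappa> ` {u}))"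
    using cnt_insert[OF fin z g, of "{u}" E] u E by auto
  also have "\<dots> = (\<Sum>\<kappa>\<in>Pset q V' E'. q - 1)"
  proof (rule sum.cong)
    fix \<kappa> assume "\<kappa> \<in> Pset q V' E'"
    then have "\<kappa> u \<in> {1..q}" using u unfolding Pset_def by auto
    then show "card ({1..q} - \<kappa> ` {u}) = q - 1" by simp
  qed simp
  finally show ?thesis unfolding cnt_def by simp
qed

lemma cnt_isolated:
  assumes fin: "finite V'" and z: "z \<notin> V'" and g: "is_graph V' E"
  shows "cnt q (insert z V') E = q * cnt q V' E"
proof -
  have "cnt q (insert z V') E = (\<Sum>\<kappa>\<in>Pset q V' E. card ({1..q} - \<kappa> ` {}))"
    using cnt_insert[OF fin z g, of "{}" E] by auto
  then show ?thesis unfolding cnt_def by simp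
qed

lemma adj_eq: "(\<lambda>x y. {x, y} \<in> E) = adj E"
  by (auto simp: adj_def fun_eq_iff)

lemma conn_rel_alt: "conn_rel V E = {(a, b). a \<in> V \<and> b \<in> V \<and> (adj E)\<^sup>*\<^sup>* a b}"
  unfolding conn_rel_def adj_eq ..

lemma adj_rtrancl_sym: "(adj E)\<^sup>*\<^sup>* a b \<Longrightarrow> (adj E)\<^sup>*\<^sup>* b a"
proof -
  have "symp (adj E)" by (auto simp: symp_def adj_sym)
  then have "symp ((adj E)\<^sup>*\<^sup>*)" by (rule symp_rtranclp)
  then show "(adj E)\<^sup>*\<^sup>* a b \<Longrightarrow> (adj E)\<^sup>*\<^sup>* b a" by (rule sympD)
qed

lemma equiv_conn: "equiv V (conn_rel V E)"
  unfolding conn_rel_alt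
  by (rule equivI) (auto simp: refl_on_def sym_def trans_def intro: adj_rtrancl_sym rtranclp_trans)

lemma isolated_reach:
  assumes "\<And>w. {z, w} \<notin> E" and "(adj E)\<^sup>*\<^sup>* z b"
  shows "b = z"
  using assms(2)
proof (induction rule: rtranclp_induct)
  case (step c b)
  then show ?case using assms(1) by (auto simp: adj_def)
qed simp

lemma mono_reach:
  assumes "E' \<subseteq> E" "(adj E')\<^sup>*\<^sup>* a b"
  shows "(adj E)\<^sup>*\<^sup>* a b"
  using assms(2)
proof (induction rule: rtranclp_induct)
  case (step c b)
  then show ?case using assms(1) by (auto simp: adj_def intro: rtranclp.rtrancl_into_rtrancl)
qed simp

lemma leaf_reach:
  assumes nz: "\<And>w. {z, w} \<in> E \<Longrightarrow> w = u" and uz: "u \<noteq> z"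
    and E': "E' = E - {{z, u}}" and az: "a \<noteq> z"
    and r: "(adj E)\<^sup>*\<^sup>* a b"
  shows "(b \<noteq> z \<longrightarrow> (adj E')\<^sup>*\<^sup>* a b) \<and> (b = z \<longrightarrow> (adj E')\<^sup>*\<^sup>* a u)"
  using r
proof (induction rule: rtranclp_induct)
  case base
  then show ?case using az by simp
next
  case (step c b)
  have cb: "{c, b} \<in> E" using step(2) by (simp add: adj_def)
  show ?case
  proof (cases "b = z")
    case True
    then have "c = u" using nz[of c] cb by (simp add: insert_commute)
    then show ?thesis using step(3) True uz by auto
  next
    case False
    show ?thesis
    proof (cases "c = z")
      case True
      then have "b = u" using nz cb by simp
      then show ?thesis using step(3) True False by simp
    next
      case cz: False
      have "{c, b} \<noteq> {z, u}" using cz False by (auto simp: doubleton_eq_iff)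
      then have "adj E' c b" using cb E' by (simp add: adj_def)
      then show ?thesis using step(3) cz False by (auto intro: rtranclp.rtrancl_into_rtrancl)
    qed
  qed
qed

lemma comps_isolated:
  assumes fin: "finite V'" and z: "z \<notin> V'" and g: "is_graph V' E"
  shows "num_components (insert z V') E = Suc (num_components V' E)"
proof -
  let ?V = "insert z V'"
  let ?R = "conn_rel ?V E" and ?R' = "conn_rel V' E"
  have nz: "\<And>w. {z, w} \<notin> E" using graph_edge_in[OF g] z by blast
  have cz: "?R `` {z} = {z}"
  proof
    show "?R `` {z} \<subseteq> {z}" using isolated_reach[OF nz] unfolding conn_rel_alt by auto
    show "{z} \<subseteq> ?R `` {z}" unfolding conn_rel_alt by auto
  qed
  have ca: "?R `` {a} = ?R' `` {a}" if a: "a \<in> V'" for a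
  proof -
    have "b \<noteq> z" if "(adj E)\<^sup>*\<^sup>* a b" for b
      using isolated_reach[OF nz, of a] adj_rtrancl_sym[OF that] a z by auto
    then show ?thesis using a unfolding conn_rel_alt by auto
  qed
  have q: "?V // ?R = insert {z} (V' // ?R')"
  proof -
    have "?V // ?R = insert (?R `` {z}) ((\<lambda>a. ?R `` {a}) ` V')"
      unfolding quotient_def by auto
    also have "(\<lambda>a. ?R `` {a}) ` V' = V' // ?R'"
      unfolding quotient_def using ca by auto
    finally show ?thesis using cz by simp
  qed
  have "{z} \<notin> V' // ?R'"
  proof
    assume "{z} \<in> V' // ?R'"
    then obtain a where "a \<in> V'" "{z} = ?R' `` {a}" by (auto elim: quotientE)
    then have "{z} \<subseteq> V'" unfolding conn_rel_alt by auto
    then show False using z by simp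
  qed
  moreover have "finite (V' // ?R')"
    using fin by (intro finite_quotient) (auto simp: conn_rel_def)
  ultimately show ?thesis unfolding num_components_def q by simp
qed

lemma comps_leaf:
  assumes fin: "finite V'" and z: "z \<notin> V'" and g: "is_graph V' E'" and u: "u \<in> V'"
    and E: "E = insert {z, u} E'"
  shows "num_components (insert z V') E = num_components V' E'"
proof -
  let ?V = "insert z V'"
  let ?R = "conn_rel ?V E" and ?R' = "conn_rel V' E'"
  have uz: "u \<noteq> z" using u z by auto
  have zE': "\<And>w. {z, w} \<notin> E'" using graph_edge_in[OF g] z by blast
  have nz: "\<And>w. {z, w} \<in> E \<Longrightarrow> w = u" using E zE' by (auto simp: doubleton_eq_iff)
  have E': "E' = E - {{z, u}}" using E zE' by auto
  have eq: "(adj E)\<^sup>*\<^sup>* a b \<longleftrightarrow> (adj E')\<^sup>*\<^sup>* a b" if "a \<noteq> z" "b \<noteq> z" for a b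
    using leaf_reach[OF nz uz E' that(1)] that mono_reach[of E' E] E by blast
  have zu: "(z, u) \<in> ?R" using u E unfolding conn_rel_alt by (auto simp: adj_def)
  have eqv: "equiv ?V ?R" by (rule equiv_conn)
  have cls: "?R `` {a} - {z} = ?R' `` {a}" if a: "a \<in> V'" for a
  proof -
    have az: "a \<noteq> z" using a z by auto
    show ?thesis
    proof (intro set_eqI iffI)
      fix b assume "b \<in> ?R `` {a} - {z}"
      then show "b \<in> ?R' `` {a}" using eq[OF az] a unfolding conn_rel_alt by auto
    next
      fix b assume b: "b \<in> ?R' `` {a}"
      then have bV: "b \<in> V'" unfolding conn_rel_alt by auto
      then have bz: "b \<noteq> z" using z by auto
      have "(adj E')\<^sup>*\<^sup>* a b" using b unfolding conn_rel_alt by auto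
      then have "(adj E)\<^sup>*\<^sup>* a b" using eq[OF az bz] by simp
      then show "b \<in> ?R `` {a} - {z}" using bV bz a unfolding conn_rel_alt by auto
    qed
  qed
  have clz: "?R `` {z} = ?R `` {u}"
    using zu eqv by (simp add: equiv_class_eq_iff)
  have img: "(\<lambda>C. C - {z}) ` (?V // ?R) = V' // ?R'"
  proof -
    have "(\<lambda>C. C - {z}) ` (?V // ?R) = (\<lambda>a. ?R `` {a} - {z}) ` ?V"
      unfolding quotient_def by auto
    also have "\<dots> = (\<lambda>a. ?R `` {a} - {z}) ` V'" using clz u by auto
    also have "\<dots> = V' // ?R'" unfolding quotient_def using cls by auto
    finally show ?thesis .
  qed
  have inj: "inj_on (\<lambda>C. C - {z}) (?V // ?R)"
  proof (rule inj_onI)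
    fix C1 C2 assume c1: "C1 \<in> ?V // ?R" and c2: "C2 \<in> ?V // ?R" and e: "C1 - {z} = C2 - {z}"
    have ne: "C - {z} \<noteq> {}" if c: "C \<in> ?V // ?R" for C
    proof -
      obtain a where a: "a \<in> ?V" "C = ?R `` {a}" using c by (auto elim: quotientE)
      show ?thesis
      proof (cases "a = z")
        case True
        then have "u \<in> C" using a clz eqv u by (auto simp: equiv_def refl_on_def)
        then show ?thesis using uz by auto
      next
        case False
        then have "a \<in> C" using a eqv by (auto simp: equiv_def refl_on_def)
        then show ?thesis using False by auto
      qed
    qed
    then have "C1 \<inter> C2 \<noteq> {}" using c1 e by blast
    then show "C1 = C2" using quotient_disj[OF eqv c1 c2] by blast
  qed
  show ?thesis unfolding num_components_def using card_image[OF inj] img by simp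
qed

lemma has_cycle_mono: "V' \<subseteq> V \<Longrightarrow> E' \<subseteq> E \<Longrightarrow> has_cycle V' E' \<Longrightarrow> has_cycle V E"
  unfolding has_cycle_def by blast

lemma forest_sub:
  assumes f: "is_forest V E" and g: "is_graph V' E'" and "V' \<subseteq> V" "E' \<subseteq> E"
  shows "is_forest V' E'"
  using f g has_cycle_mono[OF assms(3,4)] unfolding is_forest_def by blast

lemma remove_vertex:
  assumes f: "is_forest V E" and z: "z \<in> V" and d: "deg E z \<le> 1"
  obtains (iso) "is_forest (V - {z}) E" "\<And>w. {z, w} \<notin> E"
  | (leaf) u where "u \<in> V - {z}" "is_forest (V - {z}) (E - {{z, u}})" "E = insert {z, u} (E - {{z, u}})"
      "{z, u} \<notin> E - {{z, u}}"
proof -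
  have g: "is_graph V E" using f is_forest_def by auto
  have fin: "finite (nbrs E z)" using nbrs_finite[OF g] .
  have finV: "finite V" using g is_graph_def by auto
  show ?thesis
  proof (cases "nbrs E z = {}")
    case True
    then have nz: "\<And>w. {z, w} \<notin> E" unfolding nbrs_def by auto
    have "is_graph (V - {z}) E"
      unfolding is_graph_def using g finV nz
      by (auto simp: is_graph_def) (metis insert_commute)
    then show ?thesis using iso nz forest_sub[OF f] by blast
  next
    case False
    then have "card (nbrs E z) = 1" using d fin unfolding deg_def
      by (metis One_nat_def card_0_eq le_SucE le_zero_eq)
    then obtain u where u: "nbrs E z = {u}" by (rule card_1_singletonE)
    then have zu: "{z, u} \<in> E" unfolding nbrs_def by auto
    have uV: "u \<in> V" "u \<noteq> z" using graph_edge_in[OF g zu] graph_edge_neq[OF g zu] by auto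
    have nz: "\<And>w. {z, w} \<in> E \<Longrightarrow> w = u" using u unfolding nbrs_def by auto
    have "is_graph (V - {z}) (E - {{z, u}})"
      unfolding is_graph_def
    proof (intro conjI ballI)
      show "finite (V - {z})" using finV by simp
    next
      fix e assume e: "e \<in> E - {{z, u}}"
      then obtain a b where ab: "e = {a, b}" "a \<noteq> b" "a \<in> V" "b \<in> V" using g unfolding is_graph_def by blast
      have "a \<noteq> z"
      proof
        assume "a = z"
        then have "b = u" using nz[of b] e ab by auto
        then show False using e ab \<open>a = z\<close> by auto
      qed
      moreover have "b \<noteq> z"
      proof
        assume "b = z"
        then have "a = u" using nz[of a] e ab by (auto simp: insert_commute)
        then show False using e ab \<open>b = z\<close> by (auto simp: insert_commute)
      qed
      ultimately show "\<exists>u v. e = {u, v} \<and> u \<noteq> v \<and> u \<in> V - {z} \<and> v \<in> V - {z}" using ab by blast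
    qed
    then have "is_forest (V - {z}) (E - {{z, u}})" using forest_sub[OF f] by blast
    moreover have "E = insert {z, u} (E - {{z, u}})" using zu by auto
    ultimately show ?thesis using leaf uV by blast
  qed
qed

lemma graph_finE: "is_graph V E \<Longrightarrow> finite E"
proof -
  assume g: "is_graph V E"
  have "E \<subseteq> Pow V"
  proof
    fix e assume "e \<in> E"
    then obtain a b where "e = {a, b}" "a \<in> V" "b \<in> V" using g unfolding is_graph_def by blast
    then show "e \<in> Pow V" by auto
  qed
  then show ?thesis using g unfolding is_graph_def by (meson finite_Pow_iff finite_subset)
qed

lemma forest_count:
  assumes "is_forest V E"
  shows "card V = card E + num_components V E \<and> cnt q V E = q ^ num_components V E * (q - 1) ^ card E"
  using assms
proof (induction "card V" arbitrary: V E)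
  case 0
  have g: "is_graph V E" using "0.prems" is_forest_def by auto
  then have "finite V" using is_graph_def by auto
  then have V: "V = {}" using "0.hyps" by simp
  then have Ee: "E = {}" using g unfolding is_graph_def by auto
  have "num_components V E = 0" unfolding num_components_def V by simp
  moreover have "cnt q V E = 1" unfolding cnt_def Pset_def V Ee by simp
  ultimately show ?case using V Ee by simp
next
  case (Suc n)
  have g: "is_graph V E" using Suc.prems is_forest_def by auto
  then have finV: "finite V" using is_graph_def by auto
  have "V \<noteq> {}" using Suc.hyps(2) by auto
  then obtain z where z: "z \<in> V" "deg E z \<le> 1" using exists_low_deg[OF Suc.prems] by blast
  have cV: "card (V - {z}) = n" using Suc.hyps(2) z finV by simp
  have Vz: "V = insert z (V - {z})" using z by auto
  have fin': "finite (V - {z})" using finV by simp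
  consider (iso) "is_forest (V - {z}) E" "\<And>w. {z, w} \<notin> E"
    | (leaf) u where "u \<in> V - {z}" "is_forest (V - {z}) (E - {{z, u}})" "E = insert {z, u} (E - {{z, u}})"
      "{z, u} \<notin> E - {{z, u}}"
    using remove_vertex[OF Suc.prems z] by blast
  then show ?case
  proof cases
    case iso
    have IH: "card (V - {z}) = card E + num_components (V - {z}) E \<and>
      cnt q (V - {z}) E = q ^ num_components (V - {z}) E * (q - 1) ^ card E"
      using Suc.hyps(1)[OF cV[symmetric] iso(1)] .
    have g': "is_graph (V - {z}) E" using iso(1) is_forest_def by auto
    have c1: "num_components V E = Suc (num_components (V - {z}) E)"
      using comps_isolated[OF fin' _ g', of z] Vz by simp
    have c2: "cnt q V E = q * cnt q (V - {z}) E"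
      using cnt_isolated[OF fin' _ g', of z q] Vz by simp
    show ?thesis using IH c1 c2 cV Suc.hyps(2) by simp
  next
    case (leaf u)
    let ?E' = "E - {{z, u}}"
    have IH: "card (V - {z}) = card ?E' + num_components (V - {z}) ?E' \<and>
      cnt q (V - {z}) ?E' = q ^ num_components (V - {z}) ?E' * (q - 1) ^ card ?E'"
      using Suc.hyps(1)[OF cV[symmetric] leaf(2)] .
    have g': "is_graph (V - {z}) ?E'" using leaf(2) is_forest_def by auto
    have finE': "finite ?E'" using graph_finE[OF g] by simp
    have cE: "card E = Suc (card ?E')" using leaf(3,4) finE' by (metis card_insert_disjoint)
    have c1: "num_components V E = num_components (V - {z}) ?E'"
      using comps_leaf[OF fin' _ g' leaf(1) leaf(3)] Vz by simp
    have c2: "cnt q V E = (q - 1) * cnt q (V - {z}) ?E'"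
      using cnt_leaf[OF fin' _ g' leaf(1) leaf(3), where q=q] Vz by simp
    show ?thesis using IH c1 c2 cV cE Suc.hyps(2) by simp
  qed
qed

lemma cyc_rot1:
  assumes c: "cyc E vs" and k: "k < length vs"
  shows "\<exists>ws. cyc E ws \<and> ws ! 1 = vs ! k \<and> set ws = set vs"
proof (cases k)
  case 0
  have l: "length vs \<ge> 3" using c unfolding cyc_def by auto
  then have ne: "vs \<noteq> []" by auto
  have "vs = butlast vs @ [last vs]" using ne by simp
  then have c': "cyc E (butlast vs @ [last vs])" using c by simp
  have "butlast vs \<noteq> []" using l by (cases vs rule: rev_cases) auto
  then have c2: "cyc E ([last vs] @ butlast vs)" using cyc_rotate[OF c'] by simp
  have "([last vs] @ butlast vs) ! 1 = vs ! 0" using l by (simp add: nth_butlast)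
  moreover have "set ([last vs] @ butlast vs) = set vs"
    using \<open>vs = butlast vs @ [last vs]\<close> by (metis set_append Un_commute)
  ultimately show ?thesis using c2 0 by blast
next
  case (Suc m)
  show ?thesis
  proof (cases m)
    case 0
    then show ?thesis using c Suc by auto
  next
    case (Suc m')
    have e: "vs = take m vs @ drop m vs" by simp
    have "take m vs \<noteq> []" "drop m vs \<noteq> []" using Suc \<open>k = Suc m\<close> k by auto
    then have c2: "cyc E (drop m vs @ take m vs)" using cyc_rotate[of E "take m vs" "drop m vs"] c e by simp
    have "1 < length (drop m vs)" using k \<open>k = Suc m\<close> by simp
    then have "(drop m vs @ take m vs) ! 1 = drop m vs ! 1" by (simp add: nth_append)
    also have "\<dots> = vs ! k" using k \<open>k = Suc m\<close> by simp
    finally have "(drop m vs @ take m vs) ! 1 = vs ! k" .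
    moreover have "set (drop m vs @ take m vs) = set vs" using e by (metis set_append Un_commute)
    ultimately show ?thesis using c2 by blast
  qed
qed

lemma pathE_nbr:
  assumes "{(i, J), y} \<in> pathE la"
  shows "y = (i, Suc J) \<or> (J \<ge> 1 \<and> y = (i, J - 1))"
proof -
  obtain i' j where ij: "{(i, J), y} = {(i', j), (i', Suc j)}" using assms unfolding pathE_def by blast
  then have "((i, J) = (i', j) \<and> y = (i', Suc j)) \<or> ((i, J) = (i', Suc j) \<and> y = (i', j))"
    by (simp add: doubleton_eq_iff)
  then show ?thesis by auto
qed

lemma pathV_Sigma: "pathV la = (SIGMA i:{..<length la}. {..<la ! i})"
  unfolding pathV_def by auto

lemma path_graph: "is_graph (pathV la) (pathE la)"
proof -
  have "finite (pathV la)" unfolding pathV_Sigma by (intro finite_SigmaI) auto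
  moreover have "\<forall>e\<in>pathE la. \<exists>u v. e = {u, v} \<and> u \<noteq> v \<and> u \<in> pathV la \<and> v \<in> pathV la"
  proof
    fix e assume "e \<in> pathE la"
    then obtain i j where ij: "e = {(i, j), (i, Suc j)}" "i < length la" "Suc j < la ! i"
      unfolding pathE_def by blast
    have m: "(i, j) \<in> pathV la" "(i, Suc j) \<in> pathV la" using ij(2,3) unfolding pathV_def by simp_all
    show "\<exists>u v. e = {u, v} \<and> u \<noteq> v \<and> u \<in> pathV la \<and> v \<in> pathV la"
      by (rule exI[of _ "(i, j)"], rule exI[of _ "(i, Suc j)"]) (simp add: ij(1) m)
  qed
  ultimately show ?thesis unfolding is_graph_def by blast
qed

lemma path_no_cycle: "\<not> has_cycle (pathV la) (pathE la)"
proof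
  assume "has_cycle (pathV la) (pathE la)"
  then obtain vs where c: "cyc (pathE la) vs" unfolding has_cycle_cyc by blast
  have ne: "snd ` set vs \<noteq> {}" using c unfolding cyc_def by auto
  obtain x where x: "x \<in> set vs" "snd x = Max (snd ` set vs)"
    using Max_in[OF finite_imageI[OF finite_set] ne] by (metis imageE)
  obtain k where k: "k < length vs" "vs ! k = x" using x(1) by (auto simp: in_set_conv_nth)
  obtain ws where w: "cyc (pathE la) ws" "ws ! 1 = x" "set ws = set vs"
    using cyc_rot1[OF c k(1)] k(2) by blast
  have l: "length ws \<ge> 3" and d: "distinct ws" and s: "successively (adj (pathE la)) ws"
    using w(1) unfolding cyc_def by auto
  have mx: "snd y \<le> snd x" if "y \<in> set ws" for y
  proof -
    have "snd y \<in> snd ` set vs" using that w(3) by blast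
    then show ?thesis unfolding x(2) by (rule Max_ge[OF finite_imageI[OF finite_set]])
  qed
  obtain i J where xij: "x = (i, J)" by (cases x)
  have sn: "\<forall>i. Suc i < length ws \<longrightarrow> adj (pathE la) (ws ! i) (ws ! Suc i)"
    using s unfolding successively_nth .
  have a0: "adj (pathE la) (ws ! 0) (ws ! 1)" using sn[rule_format, of 0] l by simp
  have a2: "adj (pathE la) (ws ! 1) (ws ! 2)" using sn[rule_format, of 1] l by (simp add: numeral_2_eq_2)
  have "ws ! 0 = (i, J - 1)"
  proof -
    have "{(i, J), ws ! 0} \<in> pathE la" using a0 w(2) xij by (simp add: adj_def insert_commute)
    then have "ws ! 0 = (i, Suc J) \<or> (J \<ge> 1 \<and> ws ! 0 = (i, J - 1))" by (rule pathE_nbr)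
    moreover have "snd (ws ! 0) \<le> J" proof -
      have "ws ! 0 \<in> set ws" using l by (intro nth_mem) linarith
      then show ?thesis using mx[of "ws ! 0"] xij by simp
    qed
    ultimately show ?thesis by auto
  qed
  moreover have "ws ! 2 = (i, J - 1)"
  proof -
    have "{(i, J), ws ! 2} \<in> pathE la" using a2 w(2) xij by (simp add: adj_def)
    then have "ws ! 2 = (i, Suc J) \<or> (J \<ge> 1 \<and> ws ! 2 = (i, J - 1))" by (rule pathE_nbr)
    moreover have "snd (ws ! 2) \<le> J" proof -
      have "ws ! 2 \<in> set ws" using l by (intro nth_mem) linarith
      then show ?thesis using mx[of "ws ! 2"] xij by simp
    qed
    ultimately show ?thesis by auto
  qed
  ultimately have "ws ! 0 = ws ! 2" by simp
  moreover have "(0::nat) \<noteq> 2" by simp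
  moreover have "0 < length ws" "2 < length ws" using l by linarith+
  ultimately show False using nth_eq_iff_index_eq[OF d, of 0 2] by simp
qed

lemma path_forest: "is_forest (pathV la) (pathE la)"
  unfolding is_forest_def using path_graph[of la] path_no_cycle[of la] by simp

lemma card_pathV: "card (pathV la) = sum_list la"
proof -
  have "card (pathV la) = (\<Sum>i<length la. la ! i)" unfolding pathV_Sigma by simp
  then show ?thesis by (simp add: sum_list_sum_nth atLeast0LessThan)
qed

lemma card_pathE:
  assumes "0 \<notin> set la"
  shows "card (pathE la) + length la = sum_list la"
proof -
  define f where "f = (\<lambda>(i::nat, j::nat). {(i, j), (i, Suc j)})"
  have e: "pathE la = f ` (SIGMA i:{..<length la}. {j. Suc j < la ! i})"
    unfolding pathE_def f_def by (auto simp: image_iff)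
  have inj: "inj_on f (SIGMA i:{..<length la}. {j. Suc j < la ! i})"
  proof (rule inj_onI)
    fix x y assume "f x = f y"
    moreover obtain i j where x: "x = (i, j)" by (cases x)
    moreover obtain i' j' where y: "y = (i', j')" by (cases y)
    ultimately have "{(i, j), (i, Suc j)} = {(i', j'), (i', Suc j')}" unfolding f_def by simp
    then have "((i, j) = (i', j') \<and> (i, Suc j) = (i', Suc j')) \<or> ((i, j) = (i', Suc j') \<and> (i, Suc j) = (i', j'))"
      by (simp add: doubleton_eq_iff)
    then show "x = y" using x y by auto
  qed
  have c0: "{j. Suc j < k} = {..<k - 1}" for k by auto
  have "card (pathE la) = (\<Sum>i<length la. la ! i - 1)"
  proof -
    have "card (pathE la) = card (SIGMA i:{..<length la}. {j. Suc j < la ! i})"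
      unfolding e by (rule card_image[OF inj])
    then show ?thesis unfolding c0 by (subst (asm) card_SigmaI) auto
  qed
  moreover have "(\<Sum>i<length la. la ! i - 1) = sum_list (map (\<lambda>x. x - 1) la)"
    by (simp add: sum_list_sum_nth atLeast0LessThan)
  moreover have "sum_list (map (\<lambda>x. x - 1) la) + length la = sum_list la"
    using assms by (induction la) auto
  ultimately show ?thesis by simp
qed

definition bpoly :: "nat \<Rightarrow> (nat \<Rightarrow> rat) \<Rightarrow> rat poly" where
  "bpoly d b = (\<Sum>k\<le>d. smult (b k) ([:0, 1:] ^ k * [:-1, 1:] ^ (d - k)))"

lemma bpoly_Suc:
  "bpoly (Suc d) b = smult (b (Suc d)) ([:0, 1:] ^ Suc d) + [:-1, 1:] * bpoly d b"
proof -
  have "bpoly (Suc d) b = (\<Sum>k\<le>d. smult (b k) ([:0, 1:] ^ k * [:-1, 1:] ^ (Suc d - k)))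
      + smult (b (Suc d)) ([:0, 1:] ^ Suc d)"
    unfolding bpoly_def by simp
  also have "(\<Sum>k\<le>d. smult (b k) ([:0, 1:] ^ k * [:-1, 1:] ^ (Suc d - k)))
      = (\<Sum>k\<le>d. [:-1, 1:] * smult (b k) ([:0, 1:] ^ k * [:-1, 1:] ^ (d - k)))"
  proof (rule sum.cong)
    fix k assume "k \<in> {..d}"
    then have "Suc d - k = Suc (d - k)" by auto
    then show "smult (b k) ([:0, 1:] ^ k * [:-1, 1:] ^ (Suc d - k))
      = [:-1, 1:] * smult (b k) ([:0, 1:] ^ k * [:-1, 1:] ^ (d - k))"
      by (simp add: algebra_simps)
  qed simp
  also have "\<dots> = [:-1, 1:] * bpoly d b" unfolding bpoly_def by (simp add: sum_distrib_left)
  finally show ?thesis by simp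
qed

lemma bpoly_zero: "bpoly d b = 0 \<Longrightarrow> k \<le> d \<Longrightarrow> b k = 0"
proof (induction d arbitrary: k)
  case 0
  then have "smult (b 0) 1 = 0" unfolding bpoly_def by simp
  then show ?case using 0 by simp
next
  case (Suc d)
  have "poly (bpoly (Suc d) b) 1 = b (Suc d)" unfolding bpoly_Suc by simp
  then have bs: "b (Suc d) = 0" using Suc.prems by simp
  then have m: "[:-1, 1:] * bpoly d b = 0" using Suc.prems bpoly_Suc[of d b] by simp
  have "[:-1, 1:] = (0::rat poly) \<or> bpoly d b = 0" using m by (metis mult_eq_0_iff)
  moreover have "[:-1, 1:] \<noteq> (0 :: rat poly)" by simp
  ultimately have "bpoly d b = 0" by blast
  then show ?case using Suc.IH bs Suc.prems(2) by (cases "k = Suc d") auto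
qed

lemma poly_bpoly: "poly (bpoly d b) x = (\<Sum>k\<le>d. b k * x ^ k * (x - 1) ^ (d - k))"
  unfolding bpoly_def by (simp add: poly_sum mult.assoc)

lemma indep:
  assumes h: "\<And>q::nat. q \<ge> 1 \<Longrightarrow> (\<Sum>k\<le>d. b k * of_nat q ^ k * (of_nat q - 1) ^ (d - k)) = (0::rat)"
    and k: "k \<le> d"
  shows "b k = 0"
proof -
  have "bpoly d b = 0"
  proof (rule ccontr)
    assume ne: "bpoly d b \<noteq> 0"
    have "of_nat ` {1..} \<subseteq> {x. poly (bpoly d b) x = 0}"
      using h by (auto simp: poly_bpoly)
    moreover have "infinite (of_nat ` {1::nat..} :: rat set)"
    proof
      assume "finite (of_nat ` {1::nat..} :: rat set)"
      moreover have "inj_on (of_nat :: nat \<Rightarrow> rat) {1..}" by (simp add: inj_on_def)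
      ultimately have "finite {1::nat..}" by (rule finite_imageD)
      then show False using infinite_Ici by blast
    qed
    ultimately show False using poly_roots_finite[OF ne] infinite_super by blast
  qed
  then show ?thesis using bpoly_zero k by blast
qed

definition Aset :: "nat \<Rightarrow> nat \<Rightarrow> (nat \<Rightarrow> nat) set" where
  "Aset q d = {\<alpha>. (\<forall>i. \<alpha> i \<noteq> 0 \<longrightarrow> i \<in> {1..q}) \<and> (\<Sum>i\<in>{1..q}. \<alpha> i) = d}"

lemma Aset_finite: "finite (Aset q d)"
proof -
  define g where "g = (\<lambda>f::nat \<Rightarrow> nat. \<lambda>i. if i \<in> {1..q} then f i else 0)"
  have "Aset q d \<subseteq> g ` ({1..q} \<rightarrow>\<^sub>E {0..d})"
  proof
    fix \<alpha> assume a: "\<alpha> \<in> Aset q d"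
    have le: "\<alpha> i \<le> d" if "i \<in> {1..q}" for i
    proof -
      have "\<alpha> i \<le> (\<Sum>i\<in>{1..q}. \<alpha> i)" using that by (intro member_le_sum) auto
      then show ?thesis using a unfolding Aset_def by simp
    qed
    have "\<alpha> = g (restrict \<alpha> {1..q})"
      unfolding g_def using a unfolding Aset_def by (auto simp: fun_eq_iff)
    moreover have "restrict \<alpha> {1..q} \<in> {1..q} \<rightarrow>\<^sub>E {0..d}" using le by auto
    ultimately show "\<alpha> \<in> g ` ({1..q} \<rightarrow>\<^sub>E {0..d})" by blast
  qed
  then show ?thesis by (rule finite_subset) (intro finite_imageI finite_PiE; simp)
qed

definition cv :: "'a set \<Rightarrow> ('a \<Rightarrow> nat) \<Rightarrow> nat \<Rightarrow> nat" where
  "cv V \<kappa> = (\<lambda>i. card {v \<in> V. \<kappa> v = i})"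

lemma sum_fibres:
  assumes fin: "finite V" and k: "\<kappa> ` V \<subseteq> S" and fS: "finite S"
  shows "(\<Sum>i\<in>S. card {v \<in> V. \<kappa> v = i}) = card V"
proof -
  have "V = (\<Union>i\<in>S. {v \<in> V. \<kappa> v = i})" using k by auto
  moreover have "card (\<Union>i\<in>S. {v \<in> V. \<kappa> v = i}) = (\<Sum>i\<in>S. card {v \<in> V. \<kappa> v = i})"
    using fin fS by (intro card_UN_disjoint) auto
  ultimately show ?thesis by simp
qed

lemma cv_Aset:
  assumes fin: "finite V" and k: "\<kappa> \<in> V \<rightarrow>\<^sub>E {1..}"
  shows "cv V \<kappa> \<in> Aset q d \<longleftrightarrow> \<kappa> ` V \<subseteq> {1..q} \<and> d = card V"
proof
  assume a: "cv V \<kappa> \<in> Aset q d"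
  have sub: "\<kappa> ` V \<subseteq> {1..q}"
  proof
    fix c assume "c \<in> \<kappa> ` V"
    then obtain v where v: "v \<in> V" "\<kappa> v = c" by auto
    then have "card {v \<in> V. \<kappa> v = c} \<noteq> 0" using fin by (auto simp: card_eq_0_iff)
    then show "c \<in> {1..q}" using a unfolding Aset_def cv_def by blast
  qed
  moreover have "d = card V" using a sum_fibres[OF fin sub] unfolding Aset_def cv_def by simp
  ultimately show "\<kappa> ` V \<subseteq> {1..q} \<and> d = card V" by simp
next
  assume h: "\<kappa> ` V \<subseteq> {1..q} \<and> d = card V"
  have "cv V \<kappa> i \<noteq> 0 \<longrightarrow> i \<in> {1..q}" for i
  proof
    assume "cv V \<kappa> i \<noteq> 0"
    then obtain v where "v \<in> V" "\<kappa> v = i" unfolding cv_def by (metis (mono_tags, lifting) Collect_empty_eq card.empty)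
    then show "i \<in> {1..q}" using h by auto
  qed
  then show "cv V \<kappa> \<in> Aset q d" unfolding Aset_def using sum_fibres[OF fin, of \<kappa> "{1..q}"] h
    unfolding cv_def by simp
qed

lemma chrom_eq: "chrom_coeff V E \<alpha> = card {\<kappa> \<in> proper_colourings V E. cv V \<kappa> = \<alpha>}"
  unfolding chrom_coeff_def cv_def by (simp add: fun_eq_iff)

lemma spec:
  assumes fin: "finite V"
  shows "(\<Sum>\<alpha>\<in>Aset q d. chrom_coeff V E \<alpha>) = (if d = card V then cnt q V E else 0)"
proof -
  let ?P = "proper_colourings V E"
  have "(\<Sum>\<alpha>\<in>Aset q d. chrom_coeff V E \<alpha>) = (\<Sum>\<alpha>\<in>Aset q d. card {\<kappa> \<in> ?P. cv V \<kappa> = \<alpha>})"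
    unfolding chrom_eq ..
  also have "\<dots> = card (\<Union>\<alpha>\<in>Aset q d. {\<kappa> \<in> ?P. cv V \<kappa> = \<alpha>})"
  proof (rule card_UN_disjoint[symmetric])
    show "finite (Aset q d)" by (rule Aset_finite)
    show "\<forall>\<alpha>\<in>Aset q d. finite {\<kappa> \<in> ?P. cv V \<kappa> = \<alpha>}"
    proof
      fix \<alpha> assume a: "\<alpha> \<in> Aset q d"
      have "{\<kappa> \<in> ?P. cv V \<kappa> = \<alpha>} \<subseteq> V \<rightarrow>\<^sub>E {1..q}"
      proof
        fix \<kappa> assume k: "\<kappa> \<in> {\<kappa> \<in> ?P. cv V \<kappa> = \<alpha>}"
        then have kk: "\<kappa> \<in> V \<rightarrow>\<^sub>E {1..}" unfolding proper_colourings_def by auto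
        then have "\<kappa> ` V \<subseteq> {1..q}" using cv_Aset[OF fin kk, of q d] a k by auto
        then show "\<kappa> \<in> V \<rightarrow>\<^sub>E {1..q}" using kk by (auto simp: PiE_def Pi_def)
      qed
      moreover have "finite (V \<rightarrow>\<^sub>E {1..q})" using fin by (intro finite_PiE) auto
      ultimately show "finite {\<kappa> \<in> ?P. cv V \<kappa> = \<alpha>}" by (rule finite_subset)
    qed
    show "\<forall>\<alpha>\<in>Aset q d. \<forall>\<beta>\<in>Aset q d. \<alpha> \<noteq> \<beta> \<longrightarrow> {\<kappa> \<in> ?P. cv V \<kappa> = \<alpha>} \<inter> {\<kappa> \<in> ?P. cv V \<kappa> = \<beta>} = {}"
      by blast
  qed
  also have "(\<Union>\<alpha>\<in>Aset q d. {\<kappa> \<in> ?P. cv V \<kappa> = \<alpha>}) = {\<kappa> \<in> ?P. cv V \<kappa> \<in> Aset q d}"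
    by blast
  also have "{\<kappa> \<in> ?P. cv V \<kappa> \<in> Aset q d} = (if d = card V then Pset q V E else {})"
  proof (cases "d = card V")
    case True
    have "\<kappa> \<in> ?P \<and> cv V \<kappa> \<in> Aset q d \<longleftrightarrow> \<kappa> \<in> Pset q V E" for \<kappa>
    proof
      assume k: "\<kappa> \<in> ?P \<and> cv V \<kappa> \<in> Aset q d"
      then have kk: "\<kappa> \<in> V \<rightarrow>\<^sub>E {1..}" unfolding proper_colourings_def by auto
      then have "\<kappa> ` V \<subseteq> {1..q}" using cv_Aset[OF fin kk, of q d] k by auto
      then show "\<kappa> \<in> Pset q V E" using k kk unfolding Pset_def proper_colourings_def by (auto simp: PiE_def Pi_def)
    next
      assume k: "\<kappa> \<in> Pset q V E"
      then have kk: "\<kappa> \<in> V \<rightarrow>\<^sub>E {1..}" unfolding Pset_def by (auto simp: PiE_def Pi_def)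
      have "\<kappa> ` V \<subseteq> {1..q}" using k unfolding Pset_def by auto
      then show "\<kappa> \<in> ?P \<and> cv V \<kappa> \<in> Aset q d" using cv_Aset[OF fin kk, of q d] True k kk
        unfolding Pset_def proper_colourings_def by auto
    qed
    then show ?thesis using True by simp
  next
    case False
    have "\<not> (\<kappa> \<in> ?P \<and> cv V \<kappa> \<in> Aset q d)" for \<kappa>
    proof
      assume k: "\<kappa> \<in> ?P \<and> cv V \<kappa> \<in> Aset q d"
      then have kk: "\<kappa> \<in> V \<rightarrow>\<^sub>E {1..}" unfolding proper_colourings_def by auto
      then show False using cv_Aset[OF fin kk, of q d] k False by auto
    qed
    then show ?thesis using False by simp
  qed
  finally show ?thesis unfolding cnt_def by simp
qed

lemma len_le_sum: "0 \<notin> set la \<Longrightarrow> length la \<le> sum_list (la :: nat list)"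
  by (induction la) auto

lemma path_cnt:
  assumes "0 \<notin> set la"
  shows "cnt q (pathV la) (pathE la) = q ^ length la * (q - 1) ^ (sum_list la - length la)"
proof -
  have fc: "card (pathV la) = card (pathE la) + num_components (pathV la) (pathE la) \<and>
     cnt q (pathV la) (pathE la) = q ^ num_components (pathV la) (pathE la) * (q - 1) ^ card (pathE la)"
    by (rule forest_count[OF path_forest])
  have ce: "card (pathE la) + length la = sum_list la" by (rule card_pathE[OF assms])
  have "num_components (pathV la) (pathE la) = length la" using fc ce card_pathV[of la] by simp
  moreover have "card (pathE la) = sum_list la - length la" using ce by simp
  ultimately show ?thesis using fc by simp
qed

lemma spec_exp:
  assumes fin: "finite V" and pe: "path_expansion V E a"
  shows "(of_nat (if d = card V then cnt q V E else 0) :: rat) =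
    (\<Sum>la\<in>{la. a la \<noteq> 0}. a la * of_nat (if d = sum_list la then cnt q (pathV la) (pathE la) else 0))"
proof -
  let ?S = "{la. a la \<noteq> 0}"
  have eq: "\<And>\<alpha>. of_nat (chrom_coeff V E \<alpha>) =
        (\<Sum>la\<in>?S. a la * of_nat (chrom_coeff (pathV la) (pathE la) \<alpha>))"
    using pe unfolding path_expansion_def by blast
  have finP: "finite (pathV la)" for la using path_graph[of la] unfolding is_graph_def by blast
  have "(of_nat (if d = card V then cnt q V E else 0) :: rat) = of_nat (\<Sum>\<alpha>\<in>Aset q d. chrom_coeff V E \<alpha>)"
    using spec[OF fin, of E q d] by simp
  also have "\<dots> = (\<Sum>\<alpha>\<in>Aset q d. (of_nat (chrom_coeff V E \<alpha>) :: rat))" by simp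
  also have "\<dots> = (\<Sum>\<alpha>\<in>Aset q d. \<Sum>la\<in>?S. a la * of_nat (chrom_coeff (pathV la) (pathE la) \<alpha>))"
    using eq by simp
  also have "\<dots> = (\<Sum>la\<in>?S. \<Sum>\<alpha>\<in>Aset q d. a la * of_nat (chrom_coeff (pathV la) (pathE la) \<alpha>))"
    by (rule sum.swap)
  also have "\<dots> = (\<Sum>la\<in>?S. a la * of_nat (\<Sum>\<alpha>\<in>Aset q d. chrom_coeff (pathV la) (pathE la) \<alpha>))"
    by (simp add: sum_distrib_left)
  also have "\<dots> = (\<Sum>la\<in>?S. a la * of_nat (if d = sum_list la then cnt q (pathV la) (pathE la) else 0))"
    using spec[OF finP] card_pathV by simp
  finally show ?thesis .
qed

lemma unique:
  assumes f: "is_forest V E" and m: "num_components V E = m" and pe: "path_expansion V E a"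
  shows "tree_poly_of a = monom 1 m"
proof -
  let ?S = "{la. a la \<noteq> 0}"
  have g: "is_graph V E" using f is_forest_def by auto
  have fin: "finite V" using g is_graph_def by auto
  have finS: "finite ?S" using pe path_expansion_def by auto
  have part: "\<And>la. la \<in> ?S \<Longrightarrow> 0 \<notin> set la"
    using pe unfolding path_expansion_def is_partition_def by auto
  have fc: "card V = card E + m \<and> cnt q V E = q ^ m * (q - 1) ^ card E" for q
    using forest_count[OF f, of q] m by simp
  define c where "c = (\<lambda>d k. \<Sum>la\<in>{la \<in> ?S. sum_list la = d \<and> length la = k}. a la)"
  have key: "c d k = (if d = card V \<and> k = m then 1 else 0)" if kd: "k \<le> d" for d k
  proof -
    define b where "b = (\<lambda>k. c d k - (if d = card V \<and> k = m then 1 else 0))"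
    have "b k = 0"
    proof (rule indep[OF _ kd])
      fix q :: nat assume q: "q \<ge> 1"
      let ?Q = "(of_nat q :: rat)"
      have q1: "(of_nat (q - 1) :: rat) = ?Q - 1" using q by (simp add: of_nat_diff)
      let ?T = "{la \<in> ?S. sum_list la = d}"
      have finT: "finite ?T" using finS by simp
      have "(\<Sum>la\<in>?S. a la * of_nat (if d = sum_list la then cnt q (pathV la) (pathE la) else 0))
          = (\<Sum>la\<in>?T. a la * (?Q ^ length la * (?Q - 1) ^ (d - length la)))"
      proof -
        have "(\<Sum>la\<in>?S. a la * of_nat (if d = sum_list la then cnt q (pathV la) (pathE la) else 0))
          = (\<Sum>la\<in>?T. a la * of_nat (cnt q (pathV la) (pathE la)))"
        proof -
          have "(\<Sum>la\<in>?S. a la * of_nat (if d = sum_list la then cnt q (pathV la) (pathE la) else 0))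
              = (\<Sum>la\<in>?S. if sum_list la = d then a la * of_nat (cnt q (pathV la) (pathE la)) else 0)"
            by (rule sum.cong) auto
          also have "\<dots> = (\<Sum>la\<in>?T. a la * of_nat (cnt q (pathV la) (pathE la)))"
            by (rule sum.inter_filter[OF finS, symmetric])
          finally show ?thesis .
        qed
        also have "\<dots> = (\<Sum>la\<in>?T. a la * (?Q ^ length la * (?Q - 1) ^ (d - length la)))"
        proof (rule sum.cong)
          fix la assume "la \<in> ?T"
          then show "a la * of_nat (cnt q (pathV la) (pathE la)) = a la * (?Q ^ length la * (?Q - 1) ^ (d - length la))"
            using path_cnt[OF part, of la q] q1 by simp
        qed simp
        finally show ?thesis .
      qed
      also have "\<dots> = (\<Sum>k'\<le>d. \<Sum>la\<in>{la \<in> ?T. length la = k'}. a la * (?Q ^ length la * (?Q - 1) ^ (d - length la)))"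
      proof (rule sum.group[symmetric])
        show "finite ?T" by (rule finT)
        show "finite {..d}" by simp
        show "length ` ?T \<subseteq> {..d}" using len_le_sum part by fastforce
      qed
      also have "\<dots> = (\<Sum>k'\<le>d. c d k' * (?Q ^ k' * (?Q - 1) ^ (d - k')))"
      proof (rule sum.cong)
        fix k' assume "k' \<in> {..d}"
        have "{la \<in> ?T. length la = k'} = {la \<in> ?S. sum_list la = d \<and> length la = k'}" by auto
        then show "(\<Sum>la\<in>{la \<in> ?T. length la = k'}. a la * (?Q ^ length la * (?Q - 1) ^ (d - length la)))
            = c d k' * (?Q ^ k' * (?Q - 1) ^ (d - k'))"
          unfolding c_def by (simp add: sum_distrib_right)
      qed simp
      finally have R: "(\<Sum>la\<in>?S. a la * of_nat (if d = sum_list la then cnt q (pathV la) (pathE la) else 0))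
          = (\<Sum>k'\<le>d. c d k' * (?Q ^ k' * (?Q - 1) ^ (d - k')))" .
      have L: "(of_nat (if d = card V then cnt q V E else 0) :: rat)
          = (\<Sum>k'\<le>d. (if d = card V \<and> k' = m then 1 else 0) * (?Q ^ k' * (?Q - 1) ^ (d - k')))"
      proof (cases "d = card V")
        case True
        then have md: "m \<le> d" "d - m = card E" using fc[of q] by auto
        have "(\<Sum>k'\<le>d. (if d = card V \<and> k' = m then 1 else 0) * (?Q ^ k' * (?Q - 1) ^ (d - k')))
            = (\<Sum>k'\<in>{m}. (?Q ^ k' * (?Q - 1) ^ (d - k')))"
          using True md(1) by (intro sum.mono_neutral_cong_right) auto
        then show ?thesis using True md fc[of q] q1 by simp
      qed simp
      have "(\<Sum>k'\<le>d. b k' * ?Q ^ k' * (?Q - 1) ^ (d - k'))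
          = (\<Sum>k'\<le>d. c d k' * (?Q ^ k' * (?Q - 1) ^ (d - k'))) -
            (\<Sum>k'\<le>d. (if d = card V \<and> k' = m then 1 else 0) * (?Q ^ k' * (?Q - 1) ^ (d - k')))"
        unfolding b_def by (simp add: sum_subtractf[symmetric] algebra_simps)
      also have "\<dots> = 0" using R L spec_exp[OF fin pe, of d q] by simp
      finally show "(\<Sum>k'\<le>d. b k' * ?Q ^ k' * (?Q - 1) ^ (d - k')) = 0" .
    qed
    then show ?thesis unfolding b_def by simp
  qed
  show ?thesis
  proof (rule poly_eqI)
    fix k
    have "coeff (tree_poly_of a) k = (\<Sum>la\<in>?S. if length la = k then a la else 0)"
      unfolding tree_poly_of_def coeff_sum coeff_monom by (rule sum.cong) auto
    also have "\<dots> = (\<Sum>la\<in>{la \<in> ?S. length la = k}. a la)"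
      by (rule sum.inter_filter[OF finS, symmetric])
    also have "\<dots> = (\<Sum>d\<in>insert (card V) (sum_list ` ?S). \<Sum>la\<in>{la \<in> {la \<in> ?S. length la = k}. sum_list la = d}. a la)"
      by (rule sum.group[symmetric]) (use finS in auto)
    also have "\<dots> = (\<Sum>d\<in>insert (card V) (sum_list ` ?S). if d = card V \<and> k = m then 1 else 0)"
    proof (rule sum.cong)
      fix d assume "d \<in> insert (card V) (sum_list ` ?S)"
      have e: "{la \<in> {la \<in> ?S. length la = k}. sum_list la = d} = {la \<in> ?S. sum_list la = d \<and> length la = k}" by auto
      show "(\<Sum>la\<in>{la \<in> {la \<in> ?S. length la = k}. sum_list la = d}. a la) = (if d = card V \<and> k = m then 1 else 0)"
      proof (cases "k \<le> d")
        case True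
        then show ?thesis using key[OF True] unfolding e c_def by simp
      next
        case False
        have emp: "{la \<in> ?S. sum_list la = d \<and> length la = k} = {}"
          using False len_le_sum part by fastforce
        have nd: "\<not> (d = card V \<and> k = m)" using False fc[of 0] by auto
        show ?thesis unfolding e emp using nd by (simp only: sum.empty if_False)
      qed
    qed simp
    also have "\<dots> = (if k = m then 1 else 0)"
    proof (cases "k = m")
      case True
      have "(\<Sum>d\<in>insert (card V) (sum_list ` ?S). if d = card V \<and> k = m then 1 else 0)
          = (\<Sum>d\<in>insert (card V) (sum_list ` ?S). if d = card V then 1 else (0::rat))"
        using True by simp
      also have "\<dots> = 1" using finS by (simp add: sum.delta)
      finally show ?thesis using True by simp
    qed simp
    finally show "coeff (tree_poly_of a) k = coeff (monom 1 m) k" by simp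
  qed
qed

definition XP :: "nat list \<Rightarrow> (nat \<Rightarrow> nat) \<Rightarrow> rat" where
  "XP la \<alpha> = of_nat (chrom_coeff (pathV la) (pathE la) \<alpha>)"

definition in_span :: "((nat \<Rightarrow> nat) \<Rightarrow> rat) \<Rightarrow> bool" where
  "in_span f \<longleftrightarrow> (\<exists>a. finite {la. a la \<noteq> 0} \<and> (\<forall>la. a la \<noteq> 0 \<longrightarrow> is_partition la) \<and>
     (\<forall>\<alpha>. f \<alpha> = (\<Sum>la\<in>{la. a la \<noteq> 0}. a la * XP la \<alpha>)))"

lemma in_spanI:
  assumes "finite S" "\<And>la. la \<in> S \<Longrightarrow> is_partition la" "\<And>\<alpha>. f \<alpha> = (\<Sum>la\<in>S. a la * XP la \<alpha>)"
  shows "in_span f"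
proof -
  define a' where "a' = (\<lambda>la. if la \<in> S then a la else 0)"
  have sub: "{la. a' la \<noteq> 0} \<subseteq> S" unfolding a'_def by auto
  have "finite {la. a' la \<noteq> 0}" using finite_subset[OF sub assms(1)] .
  moreover have "\<forall>la. a' la \<noteq> 0 \<longrightarrow> is_partition la" using sub assms(2) by blast
  moreover have "f \<alpha> = (\<Sum>la\<in>{la. a' la \<noteq> 0}. a' la * XP la \<alpha>)" for \<alpha>
  proof -
    have "(\<Sum>la\<in>{la. a' la \<noteq> 0}. a' la * XP la \<alpha>) = (\<Sum>la\<in>S. a' la * XP la \<alpha>)"
      by (rule sum.mono_neutral_left[OF assms(1) sub]) auto
    also have "\<dots> = (\<Sum>la\<in>S. a la * XP la \<alpha>)" unfolding a'_def by (rule sum.cong) auto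
    finally show ?thesis using assms(3) by simp
  qed
  ultimately show ?thesis unfolding in_span_def by blast
qed

lemma in_spanE:
  assumes "in_span f"
  obtains S a where "finite S" "\<And>la. la \<in> S \<Longrightarrow> is_partition la" "\<And>\<alpha>. f \<alpha> = (\<Sum>la\<in>S. a la * XP la \<alpha>)"
  using assms unfolding in_span_def by blast

lemma in_span_lin:
  assumes f: "in_span f" and g: "in_span g"
  shows "in_span (\<lambda>\<alpha>. c * f \<alpha> + d * g \<alpha>)"
proof -
  obtain S a where S: "finite S" "\<And>la. la \<in> S \<Longrightarrow> is_partition la" "\<And>\<alpha>. f \<alpha> = (\<Sum>la\<in>S. a la * XP la \<alpha>)"
    using f by (rule in_spanE) (rule that)
  obtain T b where T: "finite T" "\<And>la. la \<in> T \<Longrightarrow> is_partition la" "\<And>\<alpha>. g \<alpha> = (\<Sum>la\<in>T. b la * XP la \<alpha>)"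
    using g by (rule in_spanE) (rule that)
  define a' where "a' = (\<lambda>la. if la \<in> S then a la else 0)"
  define b' where "b' = (\<lambda>la. if la \<in> T then b la else 0)"
  have fS: "f \<alpha> = (\<Sum>la\<in>S \<union> T. a' la * XP la \<alpha>)" for \<alpha>
  proof -
    have "(\<Sum>la\<in>S \<union> T. a' la * XP la \<alpha>) = (\<Sum>la\<in>S. a' la * XP la \<alpha>)"
      by (rule sum.mono_neutral_right) (auto simp: S(1) T(1) a'_def)
    also have "\<dots> = f \<alpha>" using S(3) unfolding a'_def by simp
    finally show ?thesis by simp
  qed
  have gT: "g \<alpha> = (\<Sum>la\<in>S \<union> T. b' la * XP la \<alpha>)" for \<alpha>
  proof -
    have "(\<Sum>la\<in>S \<union> T. b' la * XP la \<alpha>) = (\<Sum>la\<in>T. b' la * XP la \<alpha>)"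
      by (rule sum.mono_neutral_right) (auto simp: S(1) T(1) b'_def)
    also have "\<dots> = g \<alpha>" using T(3) unfolding b'_def by simp
    finally show ?thesis by simp
  qed
  show ?thesis
  proof (rule in_spanI[where S = "S \<union> T" and a = "\<lambda>la. c * a' la + d * b' la"])
    show "finite (S \<union> T)" using S(1) T(1) by simp
    show "\<And>la. la \<in> S \<union> T \<Longrightarrow> is_partition la" using S(2) T(2) by blast
    fix \<alpha>
    show "c * f \<alpha> + d * g \<alpha> = (\<Sum>la\<in>S \<union> T. (c * a' la + d * b' la) * XP la \<alpha>)"
      unfolding fS gT by (simp add: sum.distrib sum_distrib_left algebra_simps)
  qed
qed

lemma in_span_single: "is_partition la \<Longrightarrow> in_span (XP la)"
  by (rule in_spanI[where S = "{la}" and a = "\<lambda>_. 1"]) auto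

lemma chrom_iso:
  assumes h: "bij_betw h V1 V2" and g1: "is_graph V1 E1" and g2: "is_graph V2 E2"
    and E: "E2 = (\<lambda>e. h ` e) ` E1"
  shows "chrom_coeff V1 E1 \<alpha> = chrom_coeff V2 E2 \<alpha>"
proof -
  define g where "g = inv_into V1 h"
  have hV1: "h ` V1 = V2" and inj: "inj_on h V1" using h unfolding bij_betw_def by auto
  have gV: "\<And>w. w \<in> V2 \<Longrightarrow> g w \<in> V1" unfolding g_def by (rule inv_into_into) (simp add: hV1)
  have hg: "\<And>w. w \<in> V2 \<Longrightarrow> h (g w) = w" unfolding g_def by (rule f_inv_into_f) (simp add: hV1)
  have gh: "\<And>v. v \<in> V1 \<Longrightarrow> g (h v) = v" unfolding g_def by (rule inv_into_f_f[OF inj])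
  have hV: "\<And>v. v \<in> V1 \<Longrightarrow> h v \<in> V2" using hV1 by blast
  have edge1: "{h u, h v} \<in> E2" if "{u, v} \<in> E1" for u v
  proof -
    have "h ` {u, v} \<in> (\<lambda>e. h ` e) ` E1" by (rule imageI[OF that])
    then show ?thesis using E by simp
  qed
  have edge2: "{g x, g y} \<in> E1" if xy: "{x, y} \<in> E2" for x y
  proof -
    obtain e where e: "e \<in> E1" "{x, y} = h ` e" using xy E by blast
    obtain u v where uv: "e = {u, v}" "u \<in> V1" "v \<in> V1" using g1 e(1) unfolding is_graph_def by blast
    have "{x, y} = {h u, h v}" using e(2) uv by simp
    then have "(x = h u \<and> y = h v) \<or> (x = h v \<and> y = h u)" by (simp add: doubleton_eq_iff)
    then have "{g x, g y} = {u, v}" using gh uv by (auto simp: insert_commute)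
    then show ?thesis using e uv by simp
  qed
  have card1: "card {v \<in> V1. \<kappa> (h v) = i} = card {w \<in> V2. \<kappa> w = i}" for \<kappa> :: "'b \<Rightarrow> nat" and i
  proof -
    have "h ` {v \<in> V1. \<kappa> (h v) = i} = {w \<in> V2. \<kappa> w = i}"
    proof
      show "h ` {v \<in> V1. \<kappa> (h v) = i} \<subseteq> {w \<in> V2. \<kappa> w = i}" using hV by auto
      show "{w \<in> V2. \<kappa> w = i} \<subseteq> h ` {v \<in> V1. \<kappa> (h v) = i}"
      proof
        fix w assume "w \<in> {w \<in> V2. \<kappa> w = i}"
        then show "w \<in> h ` {v \<in> V1. \<kappa> (h v) = i}" using gV hg by (metis (mono_tags, lifting) image_eqI mem_Collect_eq)
      qed
    qed
    moreover have "inj_on h {v \<in> V1. \<kappa> (h v) = i}"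
      using h unfolding bij_betw_def by (auto intro: inj_on_subset)
    ultimately show ?thesis by (metis card_image)
  qed
  define A1 where "A1 = {\<kappa> \<in> proper_colourings V1 E1. \<forall>i. card {v \<in> V1. \<kappa> v = i} = \<alpha> i}"
  define A2 where "A2 = {\<kappa> \<in> proper_colourings V2 E2. \<forall>i. card {v \<in> V2. \<kappa> v = i} = \<alpha> i}"
  have "bij_betw (\<lambda>\<kappa>. restrict (\<kappa> \<circ> h) V1) A2 A1"
  proof (rule bij_betwI[where g = "\<lambda>\<kappa>. restrict (\<kappa> \<circ> g) V2"])
    show "(\<lambda>\<kappa>. restrict (\<kappa> \<circ> h) V1) \<in> A2 \<rightarrow> A1"
    proof
      fix \<kappa> assume k: "\<kappa> \<in> A2"
      have "restrict (\<kappa> \<circ> h) V1 \<in> V1 \<rightarrow>\<^sub>E {1..}" using k hV unfolding A2_def proper_colourings_def by auto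
      moreover have "restrict (\<kappa> \<circ> h) V1 u \<noteq> restrict (\<kappa> \<circ> h) V1 v" if e: "{u, v} \<in> E1" for u v
        using k edge1[OF e] graph_edge_in[OF g1 e] unfolding A2_def proper_colourings_def by auto
      moreover have "card {v \<in> V1. restrict (\<kappa> \<circ> h) V1 v = i} = \<alpha> i" for i
      proof -
        have "{v \<in> V1. restrict (\<kappa> \<circ> h) V1 v = i} = {v \<in> V1. \<kappa> (h v) = i}" by auto
        then show ?thesis using card1[of \<kappa> i] k unfolding A2_def by simp
      qed
      ultimately show "restrict (\<kappa> \<circ> h) V1 \<in> A1" unfolding A1_def proper_colourings_def by auto
    qed
  next
    show "(\<lambda>\<kappa>. restrict (\<kappa> \<circ> g) V2) \<in> A1 \<rightarrow> A2"
    proof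
      fix \<kappa> assume k: "\<kappa> \<in> A1"
      have "restrict (\<kappa> \<circ> g) V2 \<in> V2 \<rightarrow>\<^sub>E {1..}" using k gV unfolding A1_def proper_colourings_def by auto
      moreover have "restrict (\<kappa> \<circ> g) V2 u \<noteq> restrict (\<kappa> \<circ> g) V2 v" if e: "{u, v} \<in> E2" for u v
        using k edge2[OF e] graph_edge_in[OF g2 e] unfolding A1_def proper_colourings_def by auto
      moreover have "card {v \<in> V2. restrict (\<kappa> \<circ> g) V2 v = i} = \<alpha> i" for i
      proof -
        have "{v \<in> V2. restrict (\<kappa> \<circ> g) V2 v = i} = {w \<in> V2. (\<lambda>w. \<kappa> (g w)) w = i}" by auto
        moreover have "card {v \<in> V1. (\<lambda>w. \<kappa> (g w)) (h v) = i} = card {w \<in> V2. (\<lambda>w. \<kappa> (g w)) w = i}"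
          by (rule card1)
        moreover have "{v \<in> V1. (\<lambda>w. \<kappa> (g w)) (h v) = i} = {v \<in> V1. \<kappa> v = i}" using gh by auto
        ultimately show ?thesis using k unfolding A1_def by simp
      qed
      ultimately show "restrict (\<kappa> \<circ> g) V2 \<in> A2" unfolding A2_def proper_colourings_def by auto
    qed
  next
    fix \<kappa> assume k: "\<kappa> \<in> A2"
    then have ext: "\<kappa> \<in> extensional V2" unfolding A2_def proper_colourings_def by (auto simp: PiE_def)
    show "restrict (restrict (\<kappa> \<circ> h) V1 \<circ> g) V2 = \<kappa>"
    proof
      fix w show "restrict (restrict (\<kappa> \<circ> h) V1 \<circ> g) V2 w = \<kappa> w"
        using ext gV hg by (cases "w \<in> V2") (auto simp: extensional_def)
    qed
  next
    fix \<kappa> assume k: "\<kappa> \<in> A1"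
    then have ext: "\<kappa> \<in> extensional V1" unfolding A1_def proper_colourings_def by (auto simp: PiE_def)
    show "restrict (restrict (\<kappa> \<circ> g) V2 \<circ> h) V1 = \<kappa>"
    proof
      fix v show "restrict (restrict (\<kappa> \<circ> g) V2 \<circ> h) V1 v = \<kappa> v"
        using ext hV gh by (cases "v \<in> V1") (auto simp: extensional_def)
    qed
  qed
  then have "card A2 = card A1" by (rule bij_betw_same_card)
  then show ?thesis unfolding chrom_coeff_def A1_def A2_def by simp
qed

definition pedges :: "'a list \<Rightarrow> 'a set set" where
  "pedges p = {{p ! j, p ! Suc j} | j. Suc j < length p}"

lemma path_adj: "is_path E p \<Longrightarrow> Suc i < length p \<Longrightarrow> {p ! i, p ! Suc i} \<in> E"
  unfolding is_path_def successively_nth adj_def by blast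

lemma deg_le2_nbrs:
  assumes fin: "finite N" and c: "card N \<le> 2" and a: "a \<in> N" and b: "b \<in> N" and ab: "a \<noteq> b" and u: "u \<in> N"
  shows "u = a \<or> u = b"
proof -
  have "{a, b} \<subseteq> N" using a b by auto
  moreover have "card {a, b} = 2" using ab by simp
  ultimately have "{a, b} = N" using fin c by (metis card_subset_eq le_antisym card_mono)
  then show ?thesis using u by auto
qed

lemma linear_path_nbrs:
  assumes f: "is_forest V E" and dg: "\<forall>v\<in>V. deg E v \<le> 2"
    and p: "is_path E p" "p \<noteq> []" "set p \<subseteq> V" and z: "deg E (hd p) \<le> 1"
    and mx: "\<forall>u. {last p, u} \<in> E \<longrightarrow> u \<in> set p"
    and i: "i < length p" and e: "{p ! i, u} \<in> E"
  shows "(Suc i < length p \<and> u = p ! Suc i) \<or> (0 < i \<and> u = p ! (i - 1))"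
proof -
  have g: "is_graph V E" using f is_forest_def by auto
  show ?thesis
  proof (cases "Suc i = length p")
    case True
    then have "i = length p - 1" by simp
    then have "p ! i = last p" using p(2) by (simp add: last_conv_nth)
    then have "length p \<ge> 2 \<and> u = p ! (length p - 2)" using last_nbr_forest[OF f p mx] e by simp
    moreover have "length p - 2 = i - 1" using True by simp
    ultimately show ?thesis using True by auto
  next
    case False
    then have si: "Suc i < length p" using i by simp
    have nx: "p ! Suc i \<in> nbrs E (p ! i)" using path_adj[OF p(1) si] unfolding nbrs_def by simp
    have un: "u \<in> nbrs E (p ! i)" using e unfolding nbrs_def by simp
    show ?thesis
    proof (cases i)
      case 0
      have "card (nbrs E (p ! 0)) \<le> 1" using z p(2) by (simp add: deg_def hd_conv_nth)
      moreover have "p ! Suc 0 \<in> nbrs E (p ! 0)" "u \<in> nbrs E (p ! 0)" using nx un 0 by simp_all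
      ultimately have "u = p ! Suc 0" using card_le_Suc0_iff_eq[OF nbrs_finite[OF g]] by (metis One_nat_def)
      then show ?thesis using si 0 by simp
    next
      case (Suc i')
      have pr: "p ! i' \<in> nbrs E (p ! i)"
        using path_adj[OF p(1), of i'] si Suc unfolding nbrs_def by (simp add: insert_commute)
      have d: "p ! i' \<noteq> p ! Suc i" using p(1) si Suc unfolding is_path_def by (simp add: nth_eq_iff_index_eq)
      have "p ! i \<in> V" using p(3) nth_mem[OF i] by blast
      then have "card (nbrs E (p ! i)) \<le> 2" using dg unfolding deg_def by blast
      then have "u = p ! i' \<or> u = p ! Suc i" using deg_le2_nbrs[OF nbrs_finite[OF g] _ pr nx d un] by blast
      then show ?thesis using si Suc by auto
    qed
  qed
qed

lemma linear_rep:
  assumes "is_forest V E" "\<forall>v\<in>V. deg E v \<le> 2"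
  shows "\<exists>ps. distinct (concat ps) \<and> set (concat ps) = V \<and> [] \<notin> set ps \<and> E = (\<Union>p\<in>set ps. pedges p)"
  using assms
proof (induction "card V" arbitrary: V E rule: less_induct)
  case less
  have f: "is_forest V E" and dg: "\<forall>v\<in>V. deg E v \<le> 2" using less.prems by auto
  have g: "is_graph V E" using f is_forest_def by auto
  have finV: "finite V" using g is_graph_def by auto
  show ?case
  proof (cases "V = {}")
    case True
    then have "E = {}" using g unfolding is_graph_def by auto
    then show ?thesis using True by (intro exI[of _ "[]"]) simp
  next
    case False
    obtain z where z: "z \<in> V" "deg E z \<le> 1" using exists_low_deg[OF f False] by blast
    obtain p where p: "is_path E p" "p \<noteq> []" "hd p = z" "set p \<subseteq> V" and mx: "\<forall>u. {last p, u} \<in> E \<longrightarrow> u \<in> set p"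
      using max_path[OF g z(1)] by blast
    have nb: "\<And>i u. i < length p \<Longrightarrow> {p ! i, u} \<in> E \<Longrightarrow> (Suc i < length p \<and> u = p ! Suc i) \<or> (0 < i \<and> u = p ! (i - 1))"
      using linear_path_nbrs[OF f dg p(1,2,4) _ mx] z(2) p(3) by blast
    define V' where "V' = V - set p"
    define E' where "E' = {e \<in> E. e \<inter> set p = {}}"
    have g': "is_graph V' E'"
      unfolding is_graph_def
    proof (intro conjI ballI)
      show "finite V'" using finV V'_def by simp
      fix e assume e: "e \<in> E'"
      have eE: "e \<in> E" using e unfolding E'_def by simp
      then obtain a b where ab: "e = {a, b}" "a \<noteq> b" "a \<in> V" "b \<in> V" using g unfolding is_graph_def by blast
      then have "a \<notin> set p" "b \<notin> set p" using e unfolding E'_def by auto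
      then show "\<exists>u v. e = {u, v} \<and> u \<noteq> v \<and> u \<in> V' \<and> v \<in> V'" using ab unfolding V'_def by blast
    qed
    have sub: "V' \<subseteq> V" "E' \<subseteq> E" unfolding V'_def E'_def by auto
    have f': "is_forest V' E'" using forest_sub[OF f g' sub] .
    have dg': "\<forall>v\<in>V'. deg E' v \<le> 2"
    proof
      fix v assume v: "v \<in> V'"
      have "nbrs E' v \<subseteq> nbrs E v" unfolding nbrs_def E'_def by auto
      then have "deg E' v \<le> deg E v" unfolding deg_def using nbrs_finite[OF g] by (rule card_mono[rotated])
      then show "deg E' v \<le> 2" using dg v unfolding V'_def by auto
    qed
    have "z \<in> set p" using p(2,3) by auto
    then have "V' \<subset> V" unfolding V'_def using z(1) by blast
    then have "card V' < card V" using finV by (rule psubset_card_mono[rotated])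
    then obtain ps where ps: "distinct (concat ps)" "set (concat ps) = V'" "[] \<notin> set ps" "E' = (\<Union>p\<in>set ps. pedges p)"
      using less.hyps f' dg' by blast
    have pe: "pedges p \<subseteq> E" unfolding pedges_def using path_adj[OF p(1)] by blast
    have EE: "E = pedges p \<union> E'"
    proof
      show "pedges p \<union> E' \<subseteq> E" using pe unfolding E'_def by auto
      show "E \<subseteq> pedges p \<union> E'"
      proof
        fix e assume e: "e \<in> E"
        then obtain a b where ab: "e = {a, b}" using g unfolding is_graph_def by blast
        show "e \<in> pedges p \<union> E'"
        proof (cases "e \<inter> set p = {}")
          case True
          then show ?thesis using e unfolding E'_def by auto
        next
          case False
          then obtain x y where xy: "e = {x, y}" "x \<in> set p" using ab by auto
          then obtain i where i: "i < length p" "p ! i = x" by (auto simp: in_set_conv_nth)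
          have "{p ! i, y} \<in> E" using e xy i by simp
          then have "(Suc i < length p \<and> y = p ! Suc i) \<or> (0 < i \<and> y = p ! (i - 1))" using nb i(1) by blast
          then show ?thesis
          proof
            assume h: "Suc i < length p \<and> y = p ! Suc i"
            then have "e = {p ! i, p ! Suc i}" using xy i by simp
            then show ?thesis using h unfolding pedges_def by blast
          next
            assume h: "0 < i \<and> y = p ! (i - 1)"
            then have "e = {p ! (i - 1), p ! Suc (i - 1)}" using xy i by (simp add: insert_commute)
            moreover have "Suc (i - 1) < length p" using h i by simp
            ultimately show ?thesis unfolding pedges_def by blast
          qed
        qed
      qed
    qed
    have dp: "distinct p" using p(1) is_path_def by auto
    show ?thesis
    proof (intro exI[of _ "p # ps"] conjI)
      show "distinct (concat (p # ps))" using dp ps(1,2) unfolding V'_def by auto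
      show "set (concat (p # ps)) = V" using ps(2) p(4) unfolding V'_def by auto
      show "[] \<notin> set (p # ps)" using ps(3) p(2) by auto
      show "E = (\<Union>p\<in>set (p # ps). pedges p)" using EE ps(4) by simp
    qed
  qed
qed

lemma rep_inj:
  assumes d: "distinct (concat ps)" and ne: "[] \<notin> set ps"
    and i: "i < length ps" "j < length (ps ! i)" and i': "i' < length ps" "j' < length (ps ! i')"
    and e: "ps ! i ! j = ps ! i' ! j'"
  shows "i = i' \<and> j = j'"
proof -
  have dd: "distinct (removeAll [] ps)" "\<forall>ys\<in>set ps. distinct ys"
    "\<forall>ys zs. ys \<in> set ps \<and> zs \<in> set ps \<and> ys \<noteq> zs \<longrightarrow> set ys \<inter> set zs = {}"
    using d unfolding distinct_concat_iff by auto
  have "removeAll [] ps = ps" using ne by (simp add: removeAll_id)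
  then have dps: "distinct ps" using dd(1) by simp
  have m: "ps ! i \<in> set ps" "ps ! i' \<in> set ps" using i i' by simp_all
  have "ps ! i ! j \<in> set (ps ! i)" "ps ! i' ! j' \<in> set (ps ! i')" using i i' by simp_all
  then have "set (ps ! i) \<inter> set (ps ! i') \<noteq> {}" using e by auto
  then have "ps ! i = ps ! i'" using dd(3) m by blast
  then have ii: "i = i'" using dps i i' by (simp add: nth_eq_iff_index_eq)
  have "distinct (ps ! i)" using dd(2) m by blast
  then have "j = j'" using e ii i i' by (simp add: nth_eq_iff_index_eq)
  then show ?thesis using ii by simp
qed

lemma rep_chrom:
  assumes g: "is_graph V E" and d: "distinct (concat ps)" and s: "set (concat ps) = V"
    and ne: "[] \<notin> set ps" and E: "E = (\<Union>p\<in>set ps. pedges p)"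
  shows "chrom_coeff (pathV (map length ps)) (pathE (map length ps)) \<alpha> = chrom_coeff V E \<alpha>"
proof (rule chrom_iso)
  let ?la = "map length ps"
  define h where "h = (\<lambda>(i, j). ps ! i ! j)"
  show "is_graph (pathV ?la) (pathE ?la)" by (rule path_graph)
  show "is_graph V E" by (rule g)
  show "bij_betw h (pathV ?la) V"
    unfolding bij_betw_def
  proof
    show "inj_on h (pathV ?la)"
    proof (rule inj_onI)
      fix x y assume x: "x \<in> pathV ?la" and y: "y \<in> pathV ?la" and e: "h x = h y"
      obtain i j where xx: "x = (i, j)" "i < length ps" "j < length (ps ! i)" using x unfolding pathV_def by auto
      obtain i' j' where yy: "y = (i', j')" "i' < length ps" "j' < length (ps ! i')" using y unfolding pathV_def by auto
      have "ps ! i ! j = ps ! i' ! j'" using e xx yy unfolding h_def by simp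
      then show "x = y" using rep_inj[OF d ne xx(2,3) yy(2,3)] xx yy by simp
    qed
    show "h ` pathV ?la = V"
    proof
      show "h ` pathV ?la \<subseteq> V"
      proof
        fix y assume "y \<in> h ` pathV ?la"
        then obtain i j where ij: "y = ps ! i ! j" "i < length ps" "j < length (ps ! i)"
          unfolding h_def pathV_def by auto
        then have "ps ! i \<in> set ps" "y \<in> set (ps ! i)" by simp_all
        then show "y \<in> V" using s by auto
      qed
      show "V \<subseteq> h ` pathV ?la"
      proof
        fix v assume "v \<in> V"
        then obtain p where p: "p \<in> set ps" "v \<in> set p" using s by auto
        then obtain i where i: "i < length ps" "ps ! i = p" by (auto simp: in_set_conv_nth)
        obtain j where j: "j < length p" "p ! j = v" using p(2) by (auto simp: in_set_conv_nth)
        have "(i, j) \<in> pathV ?la" unfolding pathV_def using i j by simp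
        moreover have "h (i, j) = v" unfolding h_def using i j by simp
        ultimately show "v \<in> h ` pathV ?la" by (metis imageI)
      qed
    qed
  qed
  show "E = (\<lambda>e. h ` e) ` pathE ?la"
  proof
    show "E \<subseteq> (\<lambda>e. h ` e) ` pathE ?la"
    proof
      fix e assume "e \<in> E"
      then obtain p where p: "p \<in> set ps" "e \<in> pedges p" using E by auto
      then obtain j where j: "e = {p ! j, p ! Suc j}" "Suc j < length p" unfolding pedges_def by auto
      obtain i where i: "i < length ps" "ps ! i = p" using p(1) by (auto simp: in_set_conv_nth)
      have "Suc j < ?la ! i" using i j by simp
      then have "{(i, j), (i, Suc j)} \<in> pathE ?la" unfolding pathE_def using i by (simp only: length_map) blast
      moreover have "h ` {(i, j), (i, Suc j)} = e" unfolding h_def using i j by simp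
      ultimately show "e \<in> (\<lambda>e. h ` e) ` pathE ?la" by (metis imageI)
    qed
    show "(\<lambda>e. h ` e) ` pathE ?la \<subseteq> E"
    proof
      fix e assume "e \<in> (\<lambda>e. h ` e) ` pathE ?la"
      then obtain i j where ij: "e = h ` {(i, j), (i, Suc j)}" "i < length ps" "Suc j < length (ps ! i)"
        unfolding pathE_def by auto
      then have "e = {ps ! i ! j, ps ! i ! Suc j}" unfolding h_def by simp
      then have "e \<in> pedges (ps ! i)" unfolding pedges_def using ij(3) by blast
      moreover have "ps ! i \<in> set ps" using ij(2) by simp
      ultimately show "e \<in> E" using E by blast
    qed
  qed
qed

lemma row_perm_chrom:
  assumes f: "bij_betw f {..<length la'} {..<length la}" and l: "\<forall>i<length la'. la' ! i = la ! f i"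
  shows "chrom_coeff (pathV la') (pathE la') \<alpha> = chrom_coeff (pathV la) (pathE la) \<alpha>"
proof (rule chrom_iso)
  define r where "r = (\<lambda>(i::nat, j::nat). (f i, j))"
  show "is_graph (pathV la') (pathE la')" by (rule path_graph)
  show "is_graph (pathV la) (pathE la)" by (rule path_graph)
  have fi: "inj_on f {..<length la'}" and fim: "f ` {..<length la'} = {..<length la}"
    using f unfolding bij_betw_def by auto
  show "bij_betw r (pathV la') (pathV la)"
    unfolding bij_betw_def
  proof
    show "inj_on r (pathV la')"
    proof (rule inj_onI)
      fix x y assume x: "x \<in> pathV la'" and y: "y \<in> pathV la'" and e: "r x = r y"
      obtain i j where xx: "x = (i, j)" "i < length la'" using x unfolding pathV_def by auto
      obtain i' j' where yy: "y = (i', j')" "i' < length la'" using y unfolding pathV_def by auto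
      have "f i = f i'" "j = j'" using e xx yy unfolding r_def by auto
      then show "x = y" using fi xx yy by (auto dest: inj_onD)
    qed
    show "r ` pathV la' = pathV la"
    proof
      show "r ` pathV la' \<subseteq> pathV la"
      proof
        fix y assume "y \<in> r ` pathV la'"
        then obtain i j where ij: "y = (f i, j)" "i < length la'" "j < la' ! i" unfolding r_def pathV_def by auto
        then have "f i < length la" using fim by auto
        then show "y \<in> pathV la" using ij l unfolding pathV_def by auto
      qed
      show "pathV la \<subseteq> r ` pathV la'"
      proof
        fix y assume "y \<in> pathV la"
        then obtain k j where kj: "y = (k, j)" "k < length la" "j < la ! k" unfolding pathV_def by auto
        then obtain i where i: "i < length la'" "f i = k" using fim by (metis imageE lessThan_iff)
        have "(i, j) \<in> pathV la'" unfolding pathV_def using i kj l by auto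
        moreover have "r (i, j) = y" unfolding r_def using i kj by simp
        ultimately show "y \<in> r ` pathV la'" by (metis imageI)
      qed
    qed
  qed
  show "pathE la = (\<lambda>e. r ` e) ` pathE la'"
  proof
    show "pathE la \<subseteq> (\<lambda>e. r ` e) ` pathE la'"
    proof
      fix e assume "e \<in> pathE la"
      then obtain k j where kj: "e = {(k, j), (k, Suc j)}" "k < length la" "Suc j < la ! k" unfolding pathE_def by auto
      then obtain i where i: "i < length la'" "f i = k" using fim by (metis imageE lessThan_iff)
      have "Suc j < la' ! i" using i kj l by auto
      then have "{(i, j), (i, Suc j)} \<in> pathE la'" unfolding pathE_def using i by blast
      moreover have "r ` {(i, j), (i, Suc j)} = e" unfolding r_def using i kj by simp
      ultimately show "e \<in> (\<lambda>e. r ` e) ` pathE la'" by (metis imageI)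
    qed
    show "(\<lambda>e. r ` e) ` pathE la' \<subseteq> pathE la"
    proof
      fix e assume "e \<in> (\<lambda>e. r ` e) ` pathE la'"
      then obtain i j where ij: "e = r ` {(i, j), (i, Suc j)}" "i < length la'" "Suc j < la' ! i"
        unfolding pathE_def by auto
      then have "e = {(f i, j), (f i, Suc j)}" unfolding r_def by simp
      moreover have "f i < length la" using ij fim by auto
      moreover have "Suc j < la ! f i" using ij l by auto
      ultimately show "e \<in> pathE la" unfolding pathE_def by blast
    qed
  qed
qed

lemma linear_span:
  assumes f: "is_forest V E" and dg: "\<forall>v\<in>V. deg E v \<le> 2"
  shows "in_span (\<lambda>\<alpha>. of_nat (chrom_coeff V E \<alpha>))"
proof -
  have g: "is_graph V E" using f is_forest_def by auto
  obtain ps where ps: "distinct (concat ps)" "set (concat ps) = V" "[] \<notin> set ps" "E = (\<Union>p\<in>set ps. pedges p)"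
    using linear_rep[OF f dg] by blast
  let ?la = "map length ps"
  define la' where "la' = rev (sort ?la)"
  have "mset la' = mset ?la" unfolding la'_def by simp
  then have "la' <~~> ?la" by simp
  then obtain fb where fb: "bij_betw fb {..<length la'} {..<length ?la}" "\<forall>i<length la'. la' ! i = ?la ! fb i"
    using permutation_Ex_bij by blast
  have part: "is_partition la'"
  proof -
    have "sorted_wrt (\<ge>) la'" unfolding la'_def by (simp add: sorted_wrt_rev)
    moreover have "0 \<notin> set la'" unfolding la'_def using ps(3) by auto
    ultimately show ?thesis unfolding is_partition_def by simp
  qed
  have "\<And>\<alpha>. of_nat (chrom_coeff V E \<alpha>) = XP la' \<alpha>"
    unfolding XP_def using row_perm_chrom[OF fb] rep_chrom[OF g ps] by simp
  then have "(\<lambda>\<alpha>. of_nat (chrom_coeff V E \<alpha>)) = XP la'" by (simp add: fun_eq_iff)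
  then show ?thesis using in_span_single[OF part] by simp
qed

definition cset :: "'a set \<Rightarrow> 'a set set \<Rightarrow> (nat \<Rightarrow> nat) \<Rightarrow> ('a \<Rightarrow> nat) set" where
  "cset V E \<alpha> = {\<kappa> \<in> proper_colourings V E. \<forall>i. card {v \<in> V. \<kappa> v = i} = \<alpha> i}"

lemma chrom_cset: "chrom_coeff V E \<alpha> = card (cset V E \<alpha>)"
  unfolding chrom_coeff_def cset_def ..

lemma cset_finite:
  assumes fin: "finite V"
  shows "finite (cset V E \<alpha>)"
proof (cases "cset V E \<alpha> = {}")
  case False
  then obtain \<kappa>0 where k0: "\<kappa>0 \<in> cset V E \<alpha>" by auto
  have "cset V E \<alpha> \<subseteq> V \<rightarrow>\<^sub>E (\<kappa>0 ` V)"
  proof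
    fix \<kappa> assume k: "\<kappa> \<in> cset V E \<alpha>"
    have "\<kappa> v \<in> \<kappa>0 ` V" if v: "v \<in> V" for v
    proof -
      have "card {u \<in> V. \<kappa> u = \<kappa> v} \<noteq> 0" using v fin by (auto simp: card_eq_0_iff)
      then have "\<alpha> (\<kappa> v) \<noteq> 0" using k unfolding cset_def by simp
      then have "card {u \<in> V. \<kappa>0 u = \<kappa> v} \<noteq> 0" using k0 unfolding cset_def by simp
      then obtain u where "u \<in> V" "\<kappa>0 u = \<kappa> v" by (metis (mono_tags, lifting) Collect_empty_eq card.empty)
      then show ?thesis by (metis imageI)
    qed
    moreover have "\<kappa> \<in> extensional V" using k unfolding cset_def proper_colourings_def by (auto simp: PiE_def)
    ultimately show "\<kappa> \<in> V \<rightarrow>\<^sub>E (\<kappa>0 ` V)" by (auto simp: PiE_def Pi_def)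
  qed
  moreover have "finite (V \<rightarrow>\<^sub>E (\<kappa>0 ` V))" using fin by (intro finite_PiE) auto
  ultimately show ?thesis by (rule finite_subset)
qed simp

definition eqset :: "'a set \<Rightarrow> 'a set set \<Rightarrow> (nat \<Rightarrow> nat) \<Rightarrow> 'a \<Rightarrow> 'a \<Rightarrow> ('a \<Rightarrow> nat) set" where
  "eqset V E \<alpha> x y = {\<kappa> \<in> cset V (E - {{x, y}}) \<alpha>. \<kappa> x = \<kappa> y}"

lemma proper_insert:
  "(\<forall>u v. {u, v} \<in> insert {a, b} F \<longrightarrow> \<kappa> u \<noteq> \<kappa> v) \<longleftrightarrow> (\<forall>u v. {u, v} \<in> F \<longrightarrow> \<kappa> u \<noteq> \<kappa> v) \<and> \<kappa> a \<noteq> \<kappa> b"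
proof
  assume h: "\<forall>u v. {u, v} \<in> insert {a, b} F \<longrightarrow> \<kappa> u \<noteq> \<kappa> v"
  then show "(\<forall>u v. {u, v} \<in> F \<longrightarrow> \<kappa> u \<noteq> \<kappa> v) \<and> \<kappa> a \<noteq> \<kappa> b" by blast
next
  assume h: "(\<forall>u v. {u, v} \<in> F \<longrightarrow> \<kappa> u \<noteq> \<kappa> v) \<and> \<kappa> a \<noteq> \<kappa> b"
  show "\<forall>u v. {u, v} \<in> insert {a, b} F \<longrightarrow> \<kappa> u \<noteq> \<kappa> v"
  proof (intro allI impI)
    fix u v assume "{u, v} \<in> insert {a, b} F"
    then have "{u, v} = {a, b} \<or> {u, v} \<in> F" by simp
    then show "\<kappa> u \<noteq> \<kappa> v"
    proof
      assume "{u, v} = {a, b}"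
      then have "(u = a \<and> v = b) \<or> (u = b \<and> v = a)" by (simp add: doubleton_eq_iff)
      then show ?thesis using h by auto
    qed (use h in blast)
  qed
qed

lemma del_eq:
  assumes fin: "finite V" and e: "{x, y} \<in> E"
  shows "chrom_coeff V (E - {{x, y}}) \<alpha> = chrom_coeff V E \<alpha> + card (eqset V E \<alpha> x y)"
proof -
  have pE: "\<kappa> \<in> proper_colourings V E \<longleftrightarrow> \<kappa> \<in> proper_colourings V (E - {{x, y}}) \<and> \<kappa> x \<noteq> \<kappa> y" for \<kappa>
    unfolding proper_colourings_def using proper_insert[of x y "E - {{x, y}}" \<kappa>, unfolded insert_Diff[OF e]] by auto
  have split: "cset V (E - {{x, y}}) \<alpha> = cset V E \<alpha> \<union> eqset V E \<alpha> x y"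
    unfolding cset_def eqset_def using pE by auto
  have disj: "cset V E \<alpha> \<inter> eqset V E \<alpha> x y = {}"
    unfolding cset_def eqset_def using pE by auto
  have f1: "finite (cset V E \<alpha>)" by (rule cset_finite[OF fin])
  have f2: "finite (eqset V E \<alpha> x y)"
    using cset_finite[OF fin, of "E - {{x, y}}" \<alpha>] unfolding eqset_def by simp
  show ?thesis unfolding chrom_cset split using card_Un_disjoint[OF f1 f2 disj] by simp
qed

lemma move_eqset:
  assumes xy: "x \<noteq> y" and wx: "w \<noteq> x" and wy: "w \<noteq> y" and xw: "{x, w} \<in> E"
    and E': "E' = insert {y, w} (E - {{x, w}})"
  shows "eqset V E' \<alpha> x y = eqset V E \<alpha> x y"
proof -
  define B where "B = E - {{x, w}, {x, y}}"
  have ne: "{y, w} \<noteq> {x, y}" using wx xy by (auto simp: doubleton_eq_iff)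
  have e1: "E' - {{x, y}} = insert {y, w} B" unfolding E' B_def using ne by auto
  have xwxy: "{x, w} \<noteq> {x, y}" using wy by (auto simp: doubleton_eq_iff)
  have e2: "E - {{x, y}} = insert {x, w} B" unfolding B_def using xw xwxy by auto
  have ex: "\<kappa> \<in> proper_colourings V (E' - {{x, y}}) \<longleftrightarrow> \<kappa> \<in> proper_colourings V (E - {{x, y}})"
    if k: "\<kappa> x = \<kappa> y" for \<kappa>
  proof -
    have a: "\<kappa> \<in> proper_colourings V (E' - {{x, y}}) \<longleftrightarrow> \<kappa> \<in> V \<rightarrow>\<^sub>E {1..} \<and> (\<forall>u v. {u, v} \<in> B \<longrightarrow> \<kappa> u \<noteq> \<kappa> v) \<and> \<kappa> y \<noteq> \<kappa> w"
      unfolding proper_colourings_def e1 using proper_insert[of y w B \<kappa>] by auto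
    have b: "\<kappa> \<in> proper_colourings V (E - {{x, y}}) \<longleftrightarrow> \<kappa> \<in> V \<rightarrow>\<^sub>E {1..} \<and> (\<forall>u v. {u, v} \<in> B \<longrightarrow> \<kappa> u \<noteq> \<kappa> v) \<and> \<kappa> x \<noteq> \<kappa> w"
      unfolding proper_colourings_def e2 using proper_insert[of x w B \<kappa>] by auto
    show ?thesis using a b k by simp
  qed
  show ?thesis unfolding eqset_def cset_def using ex by auto
qed

lemma move_identity:
  assumes fin: "finite V" and xy: "{x, y} \<in> E" "x \<noteq> y" and xw: "{x, w} \<in> E" and wx: "w \<noteq> x" and wy: "w \<noteq> y"
    and E': "E' = insert {y, w} (E - {{x, w}})"
  shows "(of_nat (chrom_coeff V E \<alpha>) :: rat) =
    of_nat (chrom_coeff V (E - {{x, y}}) \<alpha>) + of_nat (chrom_coeff V E' \<alpha>) - of_nat (chrom_coeff V (E' - {{x, y}}) \<alpha>)"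
proof -
  have xy': "{x, y} \<in> E'" using xy E' wy by (auto simp: doubleton_eq_iff)
  have "chrom_coeff V (E - {{x, y}}) \<alpha> = chrom_coeff V E \<alpha> + card (eqset V E \<alpha> x y)"
    by (rule del_eq[OF fin xy(1)])
  moreover have "chrom_coeff V (E' - {{x, y}}) \<alpha> = chrom_coeff V E' \<alpha> + card (eqset V E' \<alpha> x y)"
    by (rule del_eq[OF fin xy'])
  moreover have "eqset V E' \<alpha> x y = eqset V E \<alpha> x y" by (rule move_eqset[OF xy(2) wx wy xw E'])
  ultimately show ?thesis by simp
qed

lemma cyc_closing_unique:
  assumes c: "cyc E vs" and i: "Suc i < length vs"
  shows "{vs ! i, vs ! Suc i} \<noteq> {last vs, hd vs}"
proof
  assume h: "{vs ! i, vs ! Suc i} = {last vs, hd vs}"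
  have l: "length vs \<ge> 3" and d: "distinct vs" using c unfolding cyc_def by auto
  have ne: "vs \<noteq> []" using l by auto
  have last: "last vs = vs ! (length vs - 1)" using ne by (simp add: last_conv_nth)
  have hd: "hd vs = vs ! 0" using ne by (simp add: hd_conv_nth)
  have "(vs ! i = last vs \<and> vs ! Suc i = hd vs) \<or> (vs ! i = hd vs \<and> vs ! Suc i = last vs)"
    using h by (simp add: doubleton_eq_iff)
  then show False
  proof
    assume "vs ! i = last vs \<and> vs ! Suc i = hd vs"
    then have "vs ! i = vs ! (length vs - 1)" using last by simp
    then have "i = length vs - 1" using nth_eq_iff_index_eq[OF d, of i "length vs - 1"] i by simp
    then show False using i by simp
  next
    assume a: "vs ! i = hd vs \<and> vs ! Suc i = last vs"
    then have "vs ! i = vs ! 0" using hd by simp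
    then have "i = 0" using nth_eq_iff_index_eq[OF d, of i 0] i ne by simp
    moreover have "vs ! Suc i = vs ! (length vs - 1)" using a last by simp
    then have "Suc i = length vs - 1" using nth_eq_iff_index_eq[OF d, of "Suc i" "length vs - 1"] i by simp
    ultimately show False using l by simp
  qed
qed

lemma cyc_make_closing:
  assumes c: "cyc E vs" and i: "Suc i < length vs" and e: "{vs ! i, vs ! Suc i} = f"
  shows "\<exists>ws. cyc E ws \<and> {last ws, hd ws} = f"
proof -
  let ?as = "take (Suc i) vs" and ?bs = "drop (Suc i) vs"
  have "vs = ?as @ ?bs" by simp
  moreover have ne: "?as \<noteq> []" "?bs \<noteq> []" using i by auto
  ultimately have c2: "cyc E (?bs @ ?as)" using cyc_rotate[of E ?as ?bs] c by simp
  have "last (?bs @ ?as) = last ?as" using ne by simp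
  also have "\<dots> = ?as ! i" using ne i by (simp add: last_conv_nth)
  also have "\<dots> = vs ! i" by simp
  finally have "last (?bs @ ?as) = vs ! i" .
  moreover have "hd (?bs @ ?as) = vs ! Suc i" using ne i by (simp add: hd_drop_conv_nth)
  ultimately show ?thesis using c2 e by (intro exI[of _ "?bs @ ?as"]) (auto simp: insert_commute)
qed

lemma move_forest:
  assumes f: "is_forest V E" and xy: "{x, y} \<in> E" and xw: "{x, w} \<in> E" and wy: "w \<noteq> y"
    and E': "E' = insert {y, w} (E - {{x, w}})"
  shows "is_forest V E' \<and> {y, w} \<notin> E"
proof -
  have g: "is_graph V E" using f is_forest_def by auto
  have xny: "x \<noteq> y" using graph_edge_neq[OF g xy] .
  have xnw: "x \<noteq> w" using graph_edge_neq[OF g xw] .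
  have V: "x \<in> V" "y \<in> V" "w \<in> V" using graph_edge_in[OF g xy] graph_edge_in[OF g xw] by auto
  have ywE: "{y, w} \<notin> E"
  proof
    assume yw: "{y, w} \<in> E"
    have "cyc E [x, y, w]" unfolding cyc_def adj_def using xny xnw wy xy yw xw
      by (auto simp: insert_commute)
    then show False using forest_no_cyc[OF f] by blast
  qed
  have g': "is_graph V E'"
    unfolding is_graph_def
  proof (intro conjI ballI)
    show "finite V" using g is_graph_def by auto
    fix e assume "e \<in> E'"
    then have "e = {y, w} \<or> e \<in> E" unfolding E' by auto
    then show "\<exists>u v. e = {u, v} \<and> u \<noteq> v \<and> u \<in> V \<and> v \<in> V"
    proof
      assume "e = {y, w}"
      then show ?thesis using V wy by blast
    next
      assume "e \<in> E"
      then show ?thesis using g unfolding is_graph_def by blast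
    qed
  qed
  have adjE': "{a, b} = {y, w} \<or> adj (E - {{x, w}}) a b" if "adj E' a b" for a b
    using that unfolding E' adj_def by auto
  have noc: "\<not> cyc E' vs" for vs
  proof
    assume c: "cyc E' vs"
    have "\<exists>ws. cyc E' ws \<and> {last ws, hd ws} = {y, w}"
    proof (cases "\<exists>i. Suc i < length vs \<and> {vs ! i, vs ! Suc i} = {y, w}")
      case True
      then obtain i where "Suc i < length vs" "{vs ! i, vs ! Suc i} = {y, w}" by blast
      then show ?thesis using cyc_make_closing[OF c] by blast
    next
      case nc: False
      show ?thesis
      proof (cases "{last vs, hd vs} = {y, w}")
        case True
        then show ?thesis using c by blast
      next
        case False
        have "cyc E vs"
          unfolding cyc_def
        proof (intro conjI)
          show "length vs \<ge> 3" "distinct vs" using c unfolding cyc_def by auto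
          have s: "successively (adj E') vs" using c unfolding cyc_def by auto
          show "successively (adj E) vs"
            unfolding successively_nth
          proof (intro allI impI)
            fix i assume i: "Suc i < length vs"
            then have "adj E' (vs ! i) (vs ! Suc i)" using s unfolding successively_nth by blast
            then show "adj E (vs ! i) (vs ! Suc i)" using adjE' nc i unfolding adj_def by blast
          qed
          have "adj E' (last vs) (hd vs)" using c unfolding cyc_def by auto
          then show "adj E (last vs) (hd vs)" using adjE' False unfolding adj_def by blast
        qed
        then show ?thesis using forest_no_cyc[OF f] by blast
      qed
    qed
    then obtain ws where c2: "cyc E' ws" and cl: "{last ws, hd ws} = {y, w}" by blast
    have s2: "successively (adj (E - {{x, w}})) ws"
      unfolding successively_nth
    proof (intro allI impI)
      fix i assume i: "Suc i < length ws"
      then have a: "adj E' (ws ! i) (ws ! Suc i)" using c2 unfolding cyc_def successively_nth by blast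
      have "{ws ! i, ws ! Suc i} \<noteq> {y, w}" using cyc_closing_unique[OF c2 i] cl by simp
      then show "adj (E - {{x, w}}) (ws ! i) (ws ! Suc i)" using adjE'[OF a] by blast
    qed
    obtain us where us: "distinct us" "length us \<ge> 3" "hd us = y" "last us = w"
      "successively (adj (E - {{x, w}})) us"
    proof (cases "hd ws = y")
      case True
      then have "last ws = w" using cl wy by (auto simp: doubleton_eq_iff)
      then show ?thesis using that[of ws] True s2 c2 unfolding cyc_def by auto
    next
      case False
      then have h: "hd ws = w" "last ws = y" using cl by (auto simp: doubleton_eq_iff)
      have ne: "ws \<noteq> []" using c2 unfolding cyc_def by auto
      have "hd (rev ws) = y" "last (rev ws) = w" using h ne by (simp_all add: hd_rev last_rev)
      moreover have "successively (adj (E - {{x, w}})) (rev ws)" using s2 by (simp add: adj_sym)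
      ultimately show ?thesis using that[of "rev ws"] c2 unfolding cyc_def by auto
    qed
    have sE: "successively (adj E) us" using us(5) by (rule successively_mono) (auto simp: adj_def)
    have une: "us \<noteq> []" using us(2) by auto
    show False
    proof (cases "x \<in> set us")
      case False
      have "cyc E (x # us)"
        unfolding cyc_def
      proof (intro conjI)
        show "length (x # us) \<ge> 3" using us(2) by simp
        show "distinct (x # us)" using us(1) False by simp
        show "successively (adj E) (x # us)" using sE une us(3) xy by (simp add: successively_Cons adj_def)
        show "adj E (last (x # us)) (hd (x # us))" using une us(4) xw by (simp add: adj_def insert_commute)
      qed
      then show False using forest_no_cyc[OF f] by blast
    next
      case True
      then obtain as bs where ab: "us = as @ x # bs" by (meson split_list)
      have bne: "bs \<noteq> []" using ab us(4) xnw by auto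
      have lb: "last bs = w" using ab us(4) bne by simp
      have sb: "successively (adj (E - {{x, w}})) (x # bs)" using us(5) ab by (simp add: successively_append_iff)
      have "length bs \<ge> 2"
      proof (rule ccontr)
        assume "\<not> length bs \<ge> 2"
        moreover have "length bs \<noteq> 0" using bne by simp
        ultimately have "length bs = 1" by linarith
        then have "bs = [w]" using lb by (cases bs) auto
        then have "adj (E - {{x, w}}) x w" using sb by simp
        then show False by (simp add: adj_def)
      qed
      have "cyc E (x # bs)"
        unfolding cyc_def
      proof (intro conjI)
        show "length (x # bs) \<ge> 3" using \<open>length bs \<ge> 2\<close> by simp
        show "distinct (x # bs)" using us(1) ab by simp
        show "successively (adj E) (x # bs)" using sb by (rule successively_mono) (auto simp: adj_def)
        show "adj E (last (x # bs)) (hd (x # bs))" using bne lb xw by (simp add: adj_def insert_commute)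
      qed
      then show False using forest_no_cyc[OF f] by blast
    qed
  qed
  have "\<not> has_cycle V E'" unfolding has_cycle_cyc using noc by blast
  then show ?thesis using g' ywE unfolding is_forest_def by blast
qed

definition exc :: "'a set \<Rightarrow> 'a set set \<Rightarrow> nat" where
  "exc V E = (\<Sum>v\<in>V. deg E v - 2)"

lemma move_deg:
  assumes g: "is_graph V E" and xy: "{x, y} \<in> E" and xw: "{x, w} \<in> E" and wy: "w \<noteq> y"
    and yw: "{y, w} \<notin> E" and E': "E' = insert {y, w} (E - {{x, w}})"
  shows "deg E' x = deg E x - 1" "deg E' y = Suc (deg E y)" "z \<noteq> x \<Longrightarrow> z \<noteq> y \<Longrightarrow> deg E' z = deg E z"
proof -
  have xny: "x \<noteq> y" using graph_edge_neq[OF g xy] .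
  have xnw: "x \<noteq> w" using graph_edge_neq[OF g xw] .
  have fin: "\<And>v. finite (nbrs E v)" using nbrs_finite[OF g] .
  have n1: "nbrs E' x = nbrs E x - {w}"
    unfolding nbrs_def E' using xny xnw by (auto simp: doubleton_eq_iff)
  have wn: "w \<in> nbrs E x" using xw unfolding nbrs_def by simp
  show "deg E' x = deg E x - 1" unfolding deg_def n1 using wn fin by (simp add: card_Diff_singleton)
  have n2: "nbrs E' y = insert w (nbrs E y)"
    unfolding nbrs_def E' using xny xnw wy by (auto simp: doubleton_eq_iff)
  have wn2: "w \<notin> nbrs E y" using yw unfolding nbrs_def by simp
  show "deg E' y = Suc (deg E y)" unfolding deg_def n2 using wn2 fin by simp
  assume zx: "z \<noteq> x" and zy: "z \<noteq> y"
  show "deg E' z = deg E z"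
  proof (cases "z = w")
    case False
    have "nbrs E' z = nbrs E z"
      unfolding nbrs_def E' using zx zy False by (auto simp: doubleton_eq_iff)
    then show ?thesis unfolding deg_def by simp
  next
    case True
    have n3: "nbrs E' z = insert y (nbrs E z - {x})"
      unfolding nbrs_def E' True using xny xnw wy by (auto simp: doubleton_eq_iff insert_commute)
    have "x \<in> nbrs E z" using xw True unfolding nbrs_def by (simp add: insert_commute)
    moreover have "y \<notin> nbrs E z" using yw True unfolding nbrs_def by (simp add: insert_commute)
    ultimately show ?thesis unfolding deg_def n3 using fin
      by (simp add: card_Diff_singleton) (metis card_0_eq empty_iff Suc_pred finite_Diff neq0_conv)
  qed
qed

lemma exc_split:
  assumes fin: "finite V" and x: "x \<in> V" and y: "y \<in> V" and xy: "x \<noteq> y"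
  shows "exc V E = (\<Sum>v\<in>V - {x, y}. deg E v - 2) + (deg E x - 2) + (deg E y - 2)"
proof -
  have "exc V E = (deg E x - 2) + (\<Sum>v\<in>V - {x}. deg E v - 2)"
    unfolding exc_def using fin x by (simp add: sum.remove)
  also have "(\<Sum>v\<in>V - {x}. deg E v - 2) = (deg E y - 2) + (\<Sum>v\<in>V - {x} - {y}. deg E v - 2)"
    using fin y xy by (subst sum.remove[of _ y]) auto
  also have "V - {x} - {y} = V - {x, y}" by auto
  finally show ?thesis by simp
qed

lemma move_exc:
  assumes g: "is_graph V E" and xy: "{x, y} \<in> E" and xw: "{x, w} \<in> E" and wy: "w \<noteq> y"
    and yw: "{y, w} \<notin> E" and E': "E' = insert {y, w} (E - {{x, w}})"
  shows "exc V E' + (deg E x - 2) + (deg E y - 2) = exc V E + (deg E x - 1 - 2) + (Suc (deg E y) - 2)"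
proof -
  have fin: "finite V" using g is_graph_def by auto
  have V: "x \<in> V" "y \<in> V" using graph_edge_in[OF g xy] by auto
  have xny: "x \<noteq> y" using graph_edge_neq[OF g xy] .
  note d = move_deg[OF g xy xw wy yw E']
  have "(\<Sum>v\<in>V - {x, y}. deg E' v - 2) = (\<Sum>v\<in>V - {x, y}. deg E v - 2)"
    using d(3) by (intro sum.cong) auto
  then show ?thesis using exc_split[OF fin V xny, of E'] exc_split[OF fin V xny, of E] d(1,2) by simp
qed

definition X :: "'a set \<Rightarrow> 'a set set \<Rightarrow> (nat \<Rightarrow> nat) \<Rightarrow> rat" where
  "X V E = (\<lambda>\<alpha>. of_nat (chrom_coeff V E \<alpha>))"

lemma graph_sub: "is_graph V E \<Longrightarrow> F \<subseteq> E \<Longrightarrow> is_graph V F"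
  unfolding is_graph_def by blast

lemma forest_del: "is_forest V E \<Longrightarrow> is_forest V (E - {e})"
proof -
  assume f: "is_forest V E"
  then have "is_graph V E" using is_forest_def by auto
  then have "is_graph V (E - {e})" by (rule graph_sub) auto
  then show ?thesis using forest_sub[OF f] by blast
qed

lemma move_step:
  assumes f: "is_forest V E" and xy: "{x, y} \<in> E" and xw: "{x, w} \<in> E" and wy: "w \<noteq> y"
    and E': "E' = insert {y, w} (E - {{x, w}})"
    and s1: "in_span (X V (E - {{x, y}}))" and s2: "in_span (X V E')" and s3: "in_span (X V (E' - {{x, y}}))"
  shows "in_span (X V E)"
proof -
  have g: "is_graph V E" using f is_forest_def by auto
  have fin: "finite V" using g is_graph_def by auto
  have xny: "x \<noteq> y" using graph_edge_neq[OF g xy] .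
  have xnw: "x \<noteq> w" using graph_edge_neq[OF g xw] .
  have id: "X V E \<alpha> = 1 * (1 * X V (E - {{x, y}}) \<alpha> + 1 * X V E' \<alpha>) + (-1) * X V (E' - {{x, y}}) \<alpha>" for \<alpha>
    using move_identity[OF fin xy xny xw _ wy E', of \<alpha>] xnw unfolding X_def by simp
  have "in_span (\<lambda>\<alpha>. 1 * X V (E - {{x, y}}) \<alpha> + 1 * X V E' \<alpha>)" using in_span_lin[OF s1 s2] .
  then have "in_span (\<lambda>\<alpha>. 1 * (1 * X V (E - {{x, y}}) \<alpha> + 1 * X V E' \<alpha>) + (-1) * X V (E' - {{x, y}}) \<alpha>)"
    using in_span_lin[OF _ s3] by blast
  moreover have "(\<lambda>\<alpha>. 1 * (1 * X V (E - {{x, y}}) \<alpha> + 1 * X V E' \<alpha>) + (-1) * X V (E' - {{x, y}}) \<alpha>) = X V E"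
    using id by (simp add: fun_eq_iff)
  ultimately show ?thesis by simp
qed

lemma move_card:
  assumes g: "is_graph V E" and xw: "{x, w} \<in> E" and yw: "{y, w} \<notin> E"
    and E': "E' = insert {y, w} (E - {{x, w}})"
  shows "card E' = card E"
proof -
  have fE: "finite E" using graph_finE[OF g] .
  have "{y, w} \<notin> E - {{x, w}}" using yw by simp
  then have "card E' = Suc (card (E - {{x, w}}))" unfolding E' using fE by simp
  also have "\<dots> = card E" using card_Suc_Diff1[OF fE xw] .
  finally show ?thesis .
qed

lemma card_del: "finite E \<Longrightarrow> e \<in> E \<Longrightarrow> card (E - {e}) < card E"
  by (rule card_Diff1_less)

lemma inner:
  fixes V :: "'a set" and E :: "'a set set"
  assumes IH: "\<And>E'. (E', E) \<in> measures [card, exc V] \<Longrightarrow> is_forest V E' \<Longrightarrow> in_span (X V E')"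
    and f: "is_forest V E" and p: "is_path E p" "set p \<subseteq> V" "length p \<ge> 2" "deg E (hd p) \<ge> 3" "deg E (last p) \<le> 1"
  shows "in_span (X V E)"
  using assms
proof (induction "length p" arbitrary: E p rule: less_induct)
  case less
  have IH: "\<And>E'. (E', E) \<in> measures [card, exc V] \<Longrightarrow> is_forest V E' \<Longrightarrow> in_span (X V E')"
    using less.prems(1) by blast
  have f: "is_forest V E" and p: "is_path E p" "set p \<subseteq> V" "length p \<ge> 2" "deg E (hd p) \<ge> 3" "deg E (last p) \<le> 1"
    using less.prems by auto
  have g: "is_graph V E" using f is_forest_def by auto
  have fE: "finite E" using graph_finE[OF g] .
  have dp: "distinct p" using p(1) unfolding is_path_def by simp
  have sp: "successively (adj E) p" using p(1) unfolding is_path_def by simp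
  have pne: "p \<noteq> []" using p(3) by auto
  show ?case
  proof (cases "\<exists>i. 0 < i \<and> Suc i < length p \<and> deg E (p ! i) \<ge> 3")
    case True
    then obtain i where i: "0 < i" "Suc i < length p" "deg E (p ! i) \<ge> 3" by blast
    let ?q = "drop i p"
    have q1: "is_path E ?q" using dp sp successively_drop unfolding is_path_def by auto
    have q2: "set ?q \<subseteq> V" using p(2) set_drop_subset by fastforce
    have q3: "length ?q \<ge> 2" using i by simp
    have q4: "deg E (hd ?q) \<ge> 3" using i by (simp add: hd_drop_conv_nth)
    have q5: "deg E (last ?q) \<le> 1" using i p(5) by simp
    have "length ?q < length p" using i by simp
    then show ?thesis using less.hyps[OF _ IH f q1 q2 q3 q4 q5] by blast
  next
    case False
    then have int: "\<And>i. 0 < i \<Longrightarrow> Suc i < length p \<Longrightarrow> deg E (p ! i) \<le> 2" by fastforce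
    define v where "v = p ! 0"
    define x1 where "x1 = p ! 1"
    have hv: "hd p = v" unfolding v_def using pne by (simp add: hd_conv_nth)
    have vx1: "{v, x1} \<in> E" unfolding v_def x1_def using path_adj[OF p(1), of 0] p(3) by simp
    have fin: "finite (nbrs E v)" using nbrs_finite[OF g] .
    have "\<exists>w\<in>nbrs E v. w \<noteq> x1"
    proof (rule ccontr)
      assume "\<not> (\<exists>w\<in>nbrs E v. w \<noteq> x1)"
      then have "nbrs E v \<subseteq> {x1}" by auto
      then have "card (nbrs E v) \<le> 1" using card_mono[of "{x1}" "nbrs E v"] by simp
      then show False using p(4) hv unfolding deg_def by simp
    qed
    then obtain w where w: "{v, w} \<in> E" "w \<noteq> x1" unfolding nbrs_def by auto
    define E' where "E' = insert {x1, w} (E - {{v, w}})"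
    have mf: "is_forest V E' \<and> {x1, w} \<notin> E" using move_forest[OF f vx1 w(1) w(2) E'_def] .
    then have f': "is_forest V E'" and x1w: "{x1, w} \<notin> E" by auto
    have cE': "card E' = card E" using move_card[OF g w(1) x1w E'_def] .
    have g': "is_graph V E'" using f' is_forest_def by auto
    have s1: "in_span (X V (E - {{v, x1}}))"
      using IH[OF _ forest_del[OF f]] card_del[OF fE vx1] by simp
    have s3: "in_span (X V (E' - {{v, x1}}))"
    proof -
      have "{v, x1} \<in> E'" using vx1 w(2) unfolding E'_def by (auto simp: doubleton_eq_iff)
      then have "card (E' - {{v, x1}}) < card E'" using card_del[OF graph_finE[OF g']] by blast
      then show ?thesis using IH[OF _ forest_del[OF f']] cE' by simp
    qed
    have mex: "exc V E' + (deg E v - 2) + (deg E x1 - 2) = exc V E + (deg E v - 1 - 2) + (Suc (deg E x1) - 2)"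
      using move_exc[OF g vx1 w(1) w(2) x1w E'_def] .
    have dv: "deg E v \<ge> 3" using p(4) hv by simp
    have s2: "in_span (X V E')"
    proof (cases "length p = 2")
      case True
      then have "x1 = last p" unfolding x1_def using pne by (simp add: last_conv_nth)
      then have "deg E x1 \<le> 1" using p(5) by simp
      then have "exc V E' < exc V E" using mex dv by simp
      then show ?thesis using IH[OF _ f'] cE' by simp
    next
      case False
      then have L3: "length p \<ge> 3" using p(3) by simp
      have d1le: "deg E x1 \<le> 2" unfolding x1_def using int[of 1] L3 by simp
      have "p ! 0 \<in> nbrs E x1" "p ! 2 \<in> nbrs E x1"
        using path_adj[OF p(1), of 0] path_adj[OF p(1), of 1] L3 unfolding nbrs_def x1_def
        by (simp_all add: insert_commute numeral_2_eq_2)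
      moreover have "p ! 0 \<noteq> p ! 2"
      proof -
        have "0 < length p" "2 < length p" using L3 by linarith+
        then show ?thesis using nth_eq_iff_index_eq[OF dp, of 0 2] by simp
      qed
      ultimately have "card {p ! 0, p ! 2} \<le> card (nbrs E x1)" using fin nbrs_finite[OF g]
        by (intro card_mono) auto
      then have d1: "deg E x1 = 2" using d1le \<open>p ! 0 \<noteq> p ! 2\<close> unfolding deg_def by simp
      have exeq: "exc V E' = exc V E" using mex dv d1 by simp
      have IH': "\<And>E''. (E'', E') \<in> measures [card, exc V] \<Longrightarrow> is_forest V E'' \<Longrightarrow> in_span (X V E'')"
        using IH exeq cE' by simp
      let ?q = "tl p"
      have vq: "v \<notin> set ?q" using dp pne unfolding v_def by (cases p) auto
      have q1: "is_path E' ?q"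
        unfolding is_path_def
      proof
        show "distinct ?q" using dp by (simp add: distinct_tl)
        have "successively (adj E) ?q" using sp by (cases p) (auto simp: successively_Cons)
        then show "successively (adj E') ?q"
        proof (rule successively_mono)
          fix a b assume "a \<in> set ?q" "b \<in> set ?q" "adj E a b"
          then have "{a, b} \<in> E" "{a, b} \<noteq> {v, w}" using vq unfolding adj_def by (auto simp: doubleton_eq_iff)
          then show "adj E' a b" unfolding adj_def E'_def by simp
        qed
      qed
      have q2: "set ?q \<subseteq> V" using p(2) pne by (cases p) auto
      have q3: "length ?q \<ge> 2" using L3 by simp
      have hq: "hd ?q = x1"
      proof -
        have "tl p \<noteq> []" using L3 by (cases p) auto
        then have "hd (tl p) = tl p ! 0" by (simp add: hd_conv_nth)
        also have "\<dots> = p ! 1" using pne by (cases p) auto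
        finally show ?thesis unfolding x1_def .
      qed
      have q4: "deg E' (hd ?q) \<ge> 3" using move_deg(2)[OF g vx1 w(1) w(2) x1w E'_def] d1 hq by simp
      have lq: "last ?q = last p" using L3 by (cases p) auto
      have lnv: "last p \<noteq> v" "last p \<noteq> x1"
      proof -
        have "last p = p ! (length p - 1)" using pne by (simp add: last_conv_nth)
        moreover have "length p - 1 < length p" "0 < length p" "1 < length p" "length p - 1 \<noteq> 0" "length p - 1 \<noteq> 1"
          using L3 by linarith+
        ultimately show "last p \<noteq> v" "last p \<noteq> x1" unfolding v_def x1_def
          using nth_eq_iff_index_eq[OF dp, of "length p - 1" 0] nth_eq_iff_index_eq[OF dp, of "length p - 1" 1]
          by simp_all
      qed
      have q5: "deg E' (last ?q) \<le> 1" using move_deg(3)[OF g vx1 w(1) w(2) x1w E'_def lnv] lq p(5) by simp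
      have "length ?q < length p" using pne by simp
      then show ?thesis using less.hyps[OF _ IH' f' q1 q2 q3 q4 q5] by blast
    qed
    show ?thesis using move_step[OF f vx1 w(1) w(2) E'_def s1 s2 s3] .
  qed
qed

theorem existence:
  fixes V :: "'a set"
  shows "is_forest V E \<Longrightarrow> in_span (X V E)"
proof (induction E rule: wf_induct[OF wf_measures[of "[card, exc V]"]])
  case (1 E)
  have f: "is_forest V E" by (rule 1(2))
  have IH: "\<And>E'. (E', E) \<in> measures [card, exc V] \<Longrightarrow> is_forest V E' \<Longrightarrow> in_span (X V E')"
    using 1(1) by blast
  have g: "is_graph V E" using f is_forest_def by auto
  show ?case
  proof (cases "\<forall>v\<in>V. deg E v \<le> 2")
    case True
    then show ?thesis using linear_span[OF f] unfolding X_def by simp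
  next
    case False
    then obtain v where v: "v \<in> V" "deg E v \<ge> 3" by fastforce
    obtain p where p: "is_path E p" "p \<noteq> []" "hd p = v" "set p \<subseteq> V" and mx: "\<forall>u. {last p, u} \<in> E \<longrightarrow> u \<in> set p"
      using max_path[OF g v(1)] by blast
    have "length p \<ge> 2"
    proof (rule ccontr)
      assume "\<not> length p \<ge> 2"
      moreover have "length p \<noteq> 0" using p(2) by simp
      ultimately have "length p = 1" by linarith
      then have "p = [v]" using p(3) by (cases p) auto
      then have "nbrs E v \<subseteq> {v}" using mx unfolding nbrs_def by auto
      then have "card (nbrs E v) \<le> 1" using card_mono[of "{v}" "nbrs E v"] by simp
      then show False using v(2) unfolding deg_def by simp
    qed
    moreover have "deg E (last p) \<le> 1" using last_deg_le1[OF f p(1,2,4) mx] .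
    ultimately show ?thesis using inner[OF IH f p(1) p(4)] p(3) v(2) by blast
  qed
qed

theorem proposition3p2:
  fixes V :: "'a set" and E :: "'a set set" and n m :: nat
  assumes "is_forest V E" and "card V = n" and "num_components V E = m"
  shows "(\<exists>a. path_expansion V E a) \<and>
         (\<forall>a. path_expansion V E a \<longrightarrow> tree_poly_of a = monom 1 m)"
proof
  have "in_span (X V E)" using existence[OF assms(1)] .
  then obtain a where a: "finite {la. a la \<noteq> 0}" "\<forall>la. a la \<noteq> 0 \<longrightarrow> is_partition la"
    "\<forall>\<alpha>. X V E \<alpha> = (\<Sum>la\<in>{la. a la \<noteq> 0}. a la * XP la \<alpha>)"
    unfolding in_span_def by blast
  have "path_expansion V E a" unfolding path_expansion_def using a unfolding X_def XP_def by blast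
  then show "\<exists>a. path_expansion V E a" by blast
next
  show "\<forall>a. path_expansion V E a \<longrightarrow> tree_poly_of a = monom 1 m"
    using unique[OF assms(1) assms(3)] by blast
qed

end
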